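(* Let $\mathrm{CTL}_\pm$, $\mathrm{PastCTL}_\pm$, $\mathrm{PastCTL}$ and $\mathrm{CTL}$ be the temporal logics defined in the context. Then $\mathrm{CTL}_\pm \subseteq \mathrm{PastCTL}_\pm \subseteq \mathrm{PastCTL}$ (syntactically), and moreover: (1) $\mathrm{CTL}_\pm$ is strictly less expressive than $\mathrm{PastCTL}_\pm$; (2) $\mathrm{PastCTL}_\pm$ and $\mathrm{CTL}$ are incomparable in expressive power; (3) $\mathrm{PastCTL}_\pm$ is strictly less expressive than $\mathrm{PastCTL}$.
   Context: Fix a finite set $AP$ of atomic propositions and $\Sigma=2^{AP}$. A $\Sigma$-tree is a tree that is unranked (each node has finitely many children), unordered and leafless (each node has at least one child), with a labelling $t(v)\in\Sigma$ of each node $v$. A path is a finite or infinite sequence of nodes, each (after the first) a child of the previous one. $\mathrm{PastCTL}^*$: state formulae $\varphi ::= p \mid \neg\varphi \mid \varphi\lor\varphi \mid \mathsf{D}^n\varphi \mid \mathsf{E}\psi$ and path formulae $\psi ::= \varphi \mid \neg\psi \mid \psi\lor\psi \mid \mathsf{X}\psi \mid \mathsf{Y}\psi \mid \psi\,\mathsf{U}\,\psi \mid \psi\,\mathsf{R}\,\psi \mid \psi\,\mathsf{S}\,\psi$ ($p\in AP$, $n\ge 1$). Semantics on a pointed tree $(t,u)$: $p$ holds iff $p\in t(u)$; Booleans as usual; $\mathsf{D}^n\varphi$ holds iff $u$ has at least $n$ distinct children satisfying $\varphi$; $\mathsf{E}\psi$ holds iff there is an infinite path $\pi$ starting at the root of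 $t$ with $\pi(i)=u$ for some $i$ and $(t,\pi,i)\models\psi$. On $(t,\pi,i)$: a state formula holds iff it holds at $(t,\pi(i))$; $\mathsf{X}\psi$ iff $(t,\pi,i+1)\models\psi$; $\mathsf{Y}\psi$ iff $i>0$ and $(t,\pi,i-1)\models\psi$; $\psi_1\mathsf{U}\psi_2$ iff some $j\ge i$ has $\psi_2$ at $j$ and $\psi_1$ at all $k\in[i,j)$; $\psi_1\mathsf{R}\psi_2$ iff $\psi_2$ holds at all $j\ge i$, or some $j\ge i$ has $\psi_1\land\psi_2$ at $j$ and $\psi_2$ at all $k\in[i,j)$; $\psi_1\mathsf{S}\psi_2$ iff some $j\le i$ has $\psi_2$ at $j$ and $\psi_1$ at all $k\in(j,i]$. $\mathrm{PastCTL}$ is the fragment of $\mathrm{PastCTL}^*$ in which every future temporal operator ($\mathsf{X},\mathsf{U},\mathsf{R}$) is immediately preceded by the path quantifier $\mathsf{E}$. $\mathrm{CTL}$ is the fragment of $\mathrm{PastCTL}$ without the past operators $\mathsf{Y},\mathsf{S}$. $\mathrm{PastCTL}_\pm$ is given by the grammar $\varphi ::= p \mid \neg\varphi\mid\varphi\lor\varphi\mid \mathsf{D}^n\varphi\mid \mathsf{E}\mathsf{X}\varphi\mid \mathsf{E}(\varphi\,\mathsf{U}\,\varphi)\mid \mathsf{E}\mathsf{Y}\varphi\mid\mathsf{E}(\varphi\,\mathsf{S}\,\varphi)$ (with the $\mathrm{PastCTL}^*$ semantics), and $\mathrm{CTL}_\pm$ is its fragment without $\mathsf{E}\mathsf{Y}$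 and $\mathsf{E}\mathsf{S}$. A tree $t$ is a model of a state formula $\varphi$ if $\varphi$ holds at the root of $t$; two state formulae are initially equivalent if they have the same models. A logic $L_1$ is strictly less expressive than $L_2$ if every formula of $L_1$ can be effectively translated into an initially equivalent formula of $L_2$ but not vice versa; $L_1$ and $L_2$ are incomparable if some formula of $L_1$ has no initially equivalent formula in $L_2$ and some formula of $L_2$ has no initially equivalent formula in $L_1$. *)

theory Defs
  imports Main
begin

text \<open>The numbering of children is irrelevant for
  the semantics, so trees are effectively unordered.\<close>

type_synonym 'ap tree = "nat list set \<times> (nat list \<Rightarrow> 'ap set)"

definition children :: "nat list set \<Rightarrow> nat list \<Rightarrow> nat list set" where
  "children N u = {v. \<exists>i. v = u @ [i] \<and> v \<in> N}"

definition is_tree :: "'ap tree \<Rightarrow> bool" where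
  "is_tree t \<longleftrightarrow> (let N = fst t in
     [] \<in> N
   \<and> (\<forall>u i. u @ [i] \<in> N \<longrightarrow> u \<in> N)
   \<and> (\<forall>u \<in> N. finite (children N u) \<and> children N u \<noteq> {}))"

definition is_path :: "'ap tree \<Rightarrow> (nat \<Rightarrow> nat list) \<Rightarrow> bool" where
  "is_path t \<pi> \<longleftrightarrow> \<pi> 0 = [] \<and> (\<forall>i. \<pi> (Suc i) \<in> children (fst t) (\<pi> i))"

datatype 'ap sform =
    Ap 'ap
  | SNeg "'ap sform"
  | SOr "'ap sform" "'ap sform"
  | Dn nat "'ap sform"
  | Ex "'ap pform"
and 'ap pform =
    PSt "'ap sform"
  | PNeg "'ap pform"
  | POr "'ap pform" "'ap pform"
  | Nx "'ap pform"
  | Yx "'ap pform"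
  | Until "'ap pform" "'ap pform"
  | Release "'ap pform" "'ap pform"
  | Since "'ap pform" "'ap pform"

primrec sem_s :: "'ap tree \<Rightarrow> nat list \<Rightarrow> 'ap sform \<Rightarrow> bool"
  and sem_p :: "'ap tree \<Rightarrow> (nat \<Rightarrow> nat list) \<Rightarrow> nat \<Rightarrow> 'ap pform \<Rightarrow> bool" where
  "sem_s t u (Ap p) \<longleftrightarrow> p \<in> snd t u"
| "sem_s t u (SNeg \<phi>) \<longleftrightarrow> \<not> sem_s t u \<phi>"
| "sem_s t u (SOr \<phi> \<psi>) \<longleftrightarrow> sem_s t u \<phi> \<or> sem_s t u \<psi>"
| "sem_s t u (Dn n \<phi>) \<longleftrightarrow> n \<le> card {v \<in> children (fst t) u. sem_s t v \<phi>}"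
| "sem_s t u (Ex \<psi>) \<longleftrightarrow> (\<exists>\<pi>. is_path t \<pi> \<and> (\<exists>i. \<pi> i = u \<and> sem_p t \<pi> i \<psi>))"
| "sem_p t \<pi> i (PSt \<phi>) \<longleftrightarrow> sem_s t (\<pi> i) \<phi>"
| "sem_p t \<pi> i (PNeg \<psi>) \<longleftrightarrow> \<not> sem_p t \<pi> i \<psi>"
| "sem_p t \<pi> i (POr \<psi>1 \<psi>2) \<longleftrightarrow> sem_p t \<pi> i \<psi>1 \<or> sem_p t \<pi> i \<psi>2"
| "sem_p t \<pi> i (Nx \<psi>) \<longleftrightarrow> sem_p t \<pi> (Suc i) \<psi>"
| "sem_p t \<pi> i (Yx \<psi>) \<longleftrightarrow> 0 < i \<and> sem_p t \<pi> (i - 1) \<psi>"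
| "sem_p t \<pi> i (Until \<psi>1 \<psi>2) \<longleftrightarrow>
     (\<exists>j\<ge>i. sem_p t \<pi> j \<psi>2 \<and> (\<forall>k. i \<le> k \<and> k < j \<longrightarrow> sem_p t \<pi> k \<psi>1))"
| "sem_p t \<pi> i (Release \<psi>1 \<psi>2) \<longleftrightarrow>
     (\<forall>j\<ge>i. sem_p t \<pi> j \<psi>2)
   \<or> (\<exists>j\<ge>i. sem_p t \<pi> j \<psi>1 \<and> sem_p t \<pi> j \<psi>2 \<and> (\<forall>k. i \<le> k \<and> k < j \<longrightarrow> sem_p t \<pi> k \<psi>2))"
| "sem_p t \<pi> i (Since \<psi>1 \<psi>2) \<longleftrightarrow>
     (\<exists>j\<le>i. sem_p t \<pi> j \<psi>2 \<and> (\<forall>k. j < k \<and> k \<le> i \<longrightarrow> sem_p t \<pi> k \<psi>1))"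

primrec pastctlstar_s :: "'ap sform \<Rightarrow> bool" and pastctlstar_p :: "'ap pform \<Rightarrow> bool" where
  "pastctlstar_s (Ap p) = True"
| "pastctlstar_s (SNeg \<phi>) = pastctlstar_s \<phi>"
| "pastctlstar_s (SOr \<phi> \<psi>) = (pastctlstar_s \<phi> \<and> pastctlstar_s \<psi>)"
| "pastctlstar_s (Dn n \<phi>) = (1 \<le> n \<and> pastctlstar_s \<phi>)"
| "pastctlstar_s (Ex \<psi>) = pastctlstar_p \<psi>"
| "pastctlstar_p (PSt \<phi>) = pastctlstar_s \<phi>"
| "pastctlstar_p (PNeg \<psi>) = pastctlstar_p \<psi>"
| "pastctlstar_p (POr \<psi>1 \<psi>2) = (pastctlstar_p \<psi>1 \<and> pastctlstar_p \<psi>2)"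
| "pastctlstar_p (Nx \<psi>) = pastctlstar_p \<psi>"
| "pastctlstar_p (Yx \<psi>) = pastctlstar_p \<psi>"
| "pastctlstar_p (Until \<psi>1 \<psi>2) = (pastctlstar_p \<psi>1 \<and> pastctlstar_p \<psi>2)"
| "pastctlstar_p (Release \<psi>1 \<psi>2) = (pastctlstar_p \<psi>1 \<and> pastctlstar_p \<psi>2)"
| "pastctlstar_p (Since \<psi>1 \<psi>2) = (pastctlstar_p \<psi>1 \<and> pastctlstar_p \<psi>2)"

text \<open>Every future operator X, U, R must be immediately preceded by E.
  pc_p checks a path formula in which no future operator may occur at top level;
  the occurrence directly under E is handled in the Ex case of pc_s.\<close>
fun pc_s :: "'ap sform \<Rightarrow> bool" and pc_p :: "'ap pform \<Rightarrow> bool" where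
  "pc_s (Ap p) = True"
| "pc_s (SNeg \<phi>) = pc_s \<phi>"
| "pc_s (SOr \<phi> \<psi>) = (pc_s \<phi> \<and> pc_s \<psi>)"
| "pc_s (Dn n \<phi>) = (1 \<le> n \<and> pc_s \<phi>)"
| "pc_s (Ex \<psi>) = (case \<psi> of
      Nx a \<Rightarrow> pc_p a
    | Until a b \<Rightarrow> pc_p a \<and> pc_p b
    | Release a b \<Rightarrow> pc_p a \<and> pc_p b
    | _ \<Rightarrow> pc_p \<psi>)"
| "pc_p (PSt \<phi>) = pc_s \<phi>"
| "pc_p (PNeg \<psi>) = pc_p \<psi>"
| "pc_p (POr \<psi>1 \<psi>2) = (pc_p \<psi>1 \<and> pc_p \<psi>2)"
| "pc_p (Nx \<psi>) = False"
| "pc_p (Yx \<psi>) = pc_p \<psi>"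
| "pc_p (Until \<psi>1 \<psi>2) = False"
| "pc_p (Release \<psi>1 \<psi>2) = False"
| "pc_p (Since \<psi>1 \<psi>2) = (pc_p \<psi>1 \<and> pc_p \<psi>2)"

primrec past_free_s :: "'ap sform \<Rightarrow> bool" and past_free_p :: "'ap pform \<Rightarrow> bool" where
  "past_free_s (Ap p) = True"
| "past_free_s (SNeg \<phi>) = past_free_s \<phi>"
| "past_free_s (SOr \<phi> \<psi>) = (past_free_s \<phi> \<and> past_free_s \<psi>)"
| "past_free_s (Dn n \<phi>) = past_free_s \<phi>"
| "past_free_s (Ex \<psi>) = past_free_p \<psi>"
| "past_free_p (PSt \<phi>) = past_free_s \<phi>"
| "past_free_p (PNeg \<psi>) = past_free_p \<psi>"
| "past_free_p (POr \<psi>1 \<psi>2) = (past_free_p \<psi>1 \<and> past_free_p \<psi>2)"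
| "past_free_p (Nx \<psi>) = past_free_p \<psi>"
| "past_free_p (Yx \<psi>) = False"
| "past_free_p (Until \<psi>1 \<psi>2) = (past_free_p \<psi>1 \<and> past_free_p \<psi>2)"
| "past_free_p (Release \<psi>1 \<psi>2) = (past_free_p \<psi>1 \<and> past_free_p \<psi>2)"
| "past_free_p (Since \<psi>1 \<psi>2) = False"

definition PastCTL :: "'ap sform set" where
  "PastCTL = {\<phi>. pc_s \<phi>}"

definition CTL :: "'ap sform set" where
  "CTL = {\<phi>. pc_s \<phi> \<and> past_free_s \<phi>}"

fun pastctlpm :: "'ap sform \<Rightarrow> bool" and ctlpm :: "'ap sform \<Rightarrow> bool" where
  "pastctlpm (Ap p) = True"
| "pastctlpm (SNeg \<phi>) = pastctlpm \<phi>"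
| "pastctlpm (SOr \<phi> \<psi>) = (pastctlpm \<phi> \<and> pastctlpm \<psi>)"
| "pastctlpm (Dn n \<phi>) = (1 \<le> n \<and> pastctlpm \<phi>)"
| "pastctlpm (Ex \<psi>) = (case \<psi> of
      Nx (PSt a) \<Rightarrow> pastctlpm a
    | Until (PSt a) (PSt b) \<Rightarrow> pastctlpm a \<and> pastctlpm b
    | Yx (PSt a) \<Rightarrow> pastctlpm a
    | Since (PSt a) (PSt b) \<Rightarrow> pastctlpm a \<and> pastctlpm b
    | _ \<Rightarrow> False)"
| "ctlpm (Ap p) = True"
| "ctlpm (SNeg \<phi>) = ctlpm \<phi>"
| "ctlpm (SOr \<phi> \<psi>) = (ctlpm \<phi> \<and> ctlpm \<psi>)"
| "ctlpm (Dn n \<phi>) = (1 \<le> n \<and> ctlpm \<phi>)"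
| "ctlpm (Ex \<psi>) = (case \<psi> of
      Nx (PSt a) \<Rightarrow> ctlpm a
    | Until (PSt a) (PSt b) \<Rightarrow> ctlpm a \<and> ctlpm b
    | _ \<Rightarrow> False)"

definition PastCTLpm :: "'ap sform set" where
  "PastCTLpm = {\<phi>. pastctlpm \<phi>}"

definition CTLpm :: "'ap sform set" where
  "CTLpm = {\<phi>. ctlpm \<phi>}"

definition models :: "'ap sform \<Rightarrow> 'ap tree set" where
  "models \<phi> = {t. is_tree t \<and> sem_s t [] \<phi>}"

definition init_equiv :: "'ap sform \<Rightarrow> 'ap sform \<Rightarrow> bool" where
  "init_equiv \<phi> \<psi> \<longleftrightarrow> models \<phi> = models \<psi>"

definition translatable :: "'ap sform set \<Rightarrow> 'ap sform set \<Rightarrow> bool" where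
  "translatable L1 L2 \<longleftrightarrow> (\<forall>\<phi>\<in>L1. \<exists>\<psi>\<in>L2. init_equiv \<phi> \<psi>)"

definition strictly_less_expressive :: "'ap sform set \<Rightarrow> 'ap sform set \<Rightarrow> bool" where
  "strictly_less_expressive L1 L2 \<longleftrightarrow>
     translatable L1 L2 \<and> (\<exists>\<psi>\<in>L2. \<not> (\<exists>\<phi>\<in>L1. init_equiv \<psi> \<phi>))"

definition incomparable :: "'ap sform set \<Rightarrow> 'ap sform set \<Rightarrow> bool" where
  "incomparable L1 L2 \<longleftrightarrow>
     (\<exists>\<phi>\<in>L1. \<not> (\<exists>\<psi>\<in>L2. init_equiv \<phi> \<psi>)) \<and> (\<exists>\<psi>\<in>L2. \<not> (\<exists>\<phi>\<in>L1. init_equiv \<psi> \<phi>))"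

end

theory Submission
  imports Defs
begin


lemma children_sub: "children N u \<subseteq> N"
  by (auto simp: children_def)

lemma children_form: "c \<in> children N u \<Longrightarrow> \<exists>i. c = u @ [i]"
  by (auto simp: children_def)

lemma tree_prefix:
  assumes "is_tree t" "x \<in> fst t"
  shows "take j x \<in> fst t"
proof -
  have pc: "\<And>u i. u @ [i] \<in> fst t \<Longrightarrow> u \<in> fst t"
    using assms(1) by (auto simp: is_tree_def Let_def)
  have "\<forall>x. x \<in> fst t \<longrightarrow> take (length x - n) x \<in> fst t" for n
  proof (induction n)
    case 0 then show ?case by simp
  next
    case (Suc n)
    show ?case
    proof (intro allI impI)
      fix x assume x: "x \<in> fst t"
      show "take (length x - Suc n) x \<in> fst t"
      proof (cases "x = []")
        case True then show ?thesis using x by simp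
      next
        case False
        then obtain u i where xu: "x = u @ [i]" by (metis append_butlast_last_id)
        then have "u \<in> fst t" using pc x by blast
        then have "take (length u - n) u \<in> fst t" using Suc by blast
        moreover have "take (length x - Suc n) x = take (length u - n) u" using xu by simp
        ultimately show ?thesis by simp
      qed
    qed
  qed
  from this[of "length x - j"] assms(2) show ?thesis
    by (cases "j \<le> length x") auto
qed

lemma tree_root: "is_tree t \<Longrightarrow> [] \<in> fst t"
  by (auto simp: is_tree_def Let_def)

lemma tree_children_ne: "is_tree t \<Longrightarrow> u \<in> fst t \<Longrightarrow> children (fst t) u \<noteq> {}"
  by (auto simp: is_tree_def Let_def)

lemma tree_children_fin: "is_tree t \<Longrightarrow> u \<in> fst t \<Longrightarrow> finite (children (fst t) u)"
  by (auto simp: is_tree_def Let_def)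

definition npath :: "'ap tree \<Rightarrow> nat list \<Rightarrow> nat \<Rightarrow> (nat \<Rightarrow> nat list) \<Rightarrow> bool" where
  "npath t x m f \<longleftrightarrow> f 0 = x \<and> (\<forall>j<m. f (Suc j) \<in> children (fst t) (f j))"

definition inpath :: "'ap tree \<Rightarrow> nat list \<Rightarrow> (nat \<Rightarrow> nat list) \<Rightarrow> bool" where
  "inpath t x f \<longleftrightarrow> f 0 = x \<and> (\<forall>j. f (Suc j) \<in> children (fst t) (f j))"

primrec extp :: "'ap tree \<Rightarrow> nat list \<Rightarrow> nat \<Rightarrow> nat list" where
  "extp t x 0 = x"
| "extp t x (Suc n) = (SOME c. c \<in> children (fst t) (extp t x n))"

lemma extp_inpath:
  assumes "is_tree t" "x \<in> fst t"
  shows "inpath t x (extp t x)"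
proof -
  have "extp t x n \<in> fst t" for n
  proof (induction n)
    case 0 then show ?case using assms by simp
  next
    case (Suc n)
    then have "children (fst t) (extp t x n) \<noteq> {}" using tree_children_ne assms by blast
    then have "extp t x (Suc n) \<in> children (fst t) (extp t x n)" by (simp add: some_in_eq)
    then show ?case using children_sub by blast
  qed
  then show ?thesis unfolding inpath_def
    using tree_children_ne[OF assms(1)] by (auto simp: some_in_eq)
qed

lemma inpath_mem: "is_tree t \<Longrightarrow> x \<in> fst t \<Longrightarrow> inpath t x f \<Longrightarrow> f j \<in> fst t"
proof (induction j)
  case 0 then show ?case by (simp add: inpath_def)
next
  case (Suc j)
  then have "f (Suc j) \<in> children (fst t) (f j)" by (simp add: inpath_def)
  then show ?case using children_sub by blast
qed

lemma npath_mem: "is_tree t \<Longrightarrow> x \<in> fst t \<Longrightarrow> npath t x m f \<Longrightarrow> j \<le> m \<Longrightarrow> f j \<in> fst t"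
proof (induction j)
  case 0 then show ?case by (simp add: npath_def)
next
  case (Suc j)
  then have "f (Suc j) \<in> children (fst t) (f j)" by (simp add: npath_def)
  then show ?case using children_sub by blast
qed

lemma npath_extend:
  assumes "is_tree t" "x \<in> fst t" "npath t x m f"
  shows "\<exists>g. inpath t x g \<and> (\<forall>j\<le>m. g j = f j)"
proof -
  have fm: "f m \<in> fst t" using npath_mem assms by blast
  define g where "g j = (if j \<le> m then f j else extp t (f m) (j - m))" for j
  have "inpath t x g"
    unfolding inpath_def
  proof (intro conjI allI)
    show "g 0 = x" using assms(3) by (simp add: g_def npath_def)
    fix j
    show "g (Suc j) \<in> children (fst t) (g j)"
    proof (cases "Suc j \<le> m")
      case True then show ?thesis using assms(3) by (simp add: g_def npath_def)
    next
      case False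
      have ip: "inpath t (f m) (extp t (f m))" using extp_inpath[OF assms(1) fm] .
      show ?thesis
      proof (cases "j = m")
        case True
        have "extp t (f m) (Suc 0) \<in> children (fst t) (extp t (f m) 0)" using ip unfolding inpath_def by blast
        then show ?thesis using True by (simp add: g_def)
      next
        case False
        then have "j > m" using \<open>\<not> Suc j \<le> m\<close> by simp
        then have "Suc j - m = Suc (j - m)" by simp
        then show ?thesis using ip \<open>j > m\<close> by (simp add: g_def inpath_def)
      qed
    qed
  qed
  then show ?thesis by (auto simp: g_def)
qed

lemma child_len: "c \<in> children N u \<Longrightarrow> length c = Suc (length u)"
  by (auto simp: children_def)

lemma child_take: "c \<in> children N u \<Longrightarrow> take (length u) c = u"
  by (auto simp: children_def)

lemma is_path_len: "is_path t \<pi> \<Longrightarrow> length (\<pi> i) = i"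
proof (induction i)
  case 0 then show ?case by (simp add: is_path_def)
next
  case (Suc i)
  then have "\<pi> (Suc i) \<in> children (fst t) (\<pi> i)" by (simp add: is_path_def)
  then show ?case using child_len Suc by metis
qed

lemma is_path_take: "is_path t \<pi> \<Longrightarrow> j \<le> i \<Longrightarrow> \<pi> j = take j (\<pi> i)"
proof (induction i)
  case 0 then show ?case by (simp add: is_path_def)
next
  case (Suc i)
  have c: "\<pi> (Suc i) \<in> children (fst t) (\<pi> i)" using Suc.prems by (simp add: is_path_def)
  then obtain a where a: "\<pi> (Suc i) = \<pi> i @ [a]" by (auto simp: children_def)
  show ?case
  proof (cases "j = Suc i")
    case True then show ?thesis using is_path_len[OF Suc.prems(1)] by simp
  next
    case False
    then have "j \<le> i" using Suc.prems by simp
    then show ?thesis using Suc.IH[OF Suc.prems(1)] a is_path_len[OF Suc.prems(1), of i] by simp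
  qed
qed

lemma is_path_mem: "is_tree t \<Longrightarrow> is_path t \<pi> \<Longrightarrow> \<pi> i \<in> fst t"
proof (induction i)
  case 0 then show ?case by (simp add: is_path_def tree_root)
next
  case (Suc i)
  then have "\<pi> (Suc i) \<in> children (fst t) (\<pi> i)" by (simp add: is_path_def)
  then show ?case using children_sub by blast
qed

lemma path_through:
  assumes "is_tree t" "x \<in> fst t" "inpath t x f"
  shows "\<exists>\<pi>. is_path t \<pi> \<and> (\<forall>j. \<pi> (length x + j) = f j)"
proof -
  define \<pi> where "\<pi> j = (if j \<le> length x then take j x else f (j - length x))" for j
  have "is_path t \<pi>"
    unfolding is_path_def
  proof (intro conjI allI)
    show "\<pi> 0 = []" by (simp add: \<pi>_def)
    fix j
    show "\<pi> (Suc j) \<in> children (fst t) (\<pi> j)"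
    proof (cases "Suc j \<le> length x")
      case True
      have "take (Suc j) x = take j x @ [x ! j]" using True by (simp add: take_Suc_conv_app_nth)
      moreover have "take (Suc j) x \<in> fst t" using tree_prefix assms by blast
      ultimately show ?thesis using True by (auto simp: \<pi>_def children_def)
    next
      case False
      show ?thesis
      proof (cases "j = length x")
        case True
        have "f (Suc 0) \<in> children (fst t) (f 0)" using assms(3) unfolding inpath_def by blast
        then show ?thesis using True assms(3) by (simp add: \<pi>_def inpath_def)
      next
        case False
        then have "j > length x" using \<open>\<not> Suc j \<le> length x\<close> by simp
        then have "Suc j - length x = Suc (j - length x)" by simp
        then show ?thesis using assms(3) \<open>j > length x\<close> by (simp add: \<pi>_def inpath_def)
      qed
    qed
  qed
  moreover have "\<pi> (length x + j) = f j" for j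
    using assms(3) by (cases j) (auto simp: \<pi>_def inpath_def)
  ultimately show ?thesis by blast
qed

lemma exists_path_through:
  assumes "is_tree t" "x \<in> fst t"
  shows "\<exists>\<pi>. is_path t \<pi> \<and> \<pi> (length x) = x"
  using path_through[OF assms extp_inpath[OF assms]] by (metis add_0_right extp.simps(1))

lemma suffix_inpath: "is_path t \<pi> \<Longrightarrow> inpath t (\<pi> i) (\<lambda>j. \<pi> (i + j))"
  by (simp add: inpath_def is_path_def)


fun lsem :: "'ap tree \<Rightarrow> nat list \<Rightarrow> 'ap pform \<Rightarrow> bool" where
  "lsem t v (PSt \<phi>) = sem_s t v \<phi>"
| "lsem t v (PNeg \<psi>) = (\<not> lsem t v \<psi>)"
| "lsem t v (POr a b) = (lsem t v a \<or> lsem t v b)"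
| "lsem t v _ = False"

definition loc :: "'ap pform \<Rightarrow> bool" where
  "loc \<psi> \<longleftrightarrow> (\<forall>t \<pi> i. sem_p t \<pi> i \<psi> = lsem t (\<pi> i) \<psi>)"

lemma loc_PSt[simp]: "loc (PSt \<phi>)"
  by (simp add: loc_def)

lemma locD: "loc \<psi> \<Longrightarrow> sem_p t \<pi> i \<psi> = lsem t (\<pi> i) \<psi>"
  unfolding loc_def by blast

lemma loc_ctl: "pc_p \<psi> \<Longrightarrow> past_free_p \<psi> \<Longrightarrow> loc \<psi>"
  by (induction \<psi>) (auto simp: loc_def)

lemma sem_EX:
  assumes t: "is_tree t" and x: "x \<in> fst t" and l: "loc a"
  shows "sem_s t x (Ex (Nx a)) \<longleftrightarrow> (\<exists>c\<in>children (fst t) x. lsem t c a)"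
proof
  assume "sem_s t x (Ex (Nx a))"
  then obtain \<pi> i where p: "is_path t \<pi>" "\<pi> i = x" "sem_p t \<pi> (Suc i) a" by auto
  then have "\<pi> (Suc i) \<in> children (fst t) x" by (auto simp: is_path_def)
  then show "\<exists>c\<in>children (fst t) x. lsem t c a" using p l by (auto simp: locD)
next
  assume "\<exists>c\<in>children (fst t) x. lsem t c a"
  then obtain c where c: "c \<in> children (fst t) x" "lsem t c a" by blast
  have "c \<in> fst t" using c children_sub by blast
  then obtain \<pi> where p: "is_path t \<pi>" "\<pi> (length c) = c" using exists_path_through t by blast
  have lc: "length c = Suc (length x)" using c child_len by blast
  have "\<pi> (length x) = take (length x) c" using is_path_take[OF p(1), of "length x" "length c"] p(2) lc by simp
  then have "\<pi> (length x) = x" using c child_take by metis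
  then show "sem_s t x (Ex (Nx a))" using p lc c l by (auto simp: locD)
qed

lemma sem_EU:
  assumes t: "is_tree t" and x: "x \<in> fst t" and la: "loc a" and lb: "loc b"
  shows "sem_s t x (Ex (Until a b)) \<longleftrightarrow>
     (\<exists>m f. npath t x m f \<and> lsem t (f m) b \<and> (\<forall>j<m. lsem t (f j) a))"
proof
  assume "sem_s t x (Ex (Until a b))"
  then obtain \<pi> i j where p: "is_path t \<pi>" "\<pi> i = x" "j \<ge> i" "sem_p t \<pi> j b"
     "\<forall>k. i \<le> k \<and> k < j \<longrightarrow> sem_p t \<pi> k a" by auto
  define f where "f n = \<pi> (i + n)" for n
  have "npath t x (j - i) f" using p by (simp add: npath_def f_def is_path_def)
  moreover have "lsem t (f (j - i)) b" using p lb by (simp add: f_def locD)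
  moreover have "\<forall>n<j-i. lsem t (f n) a" using p la by (simp add: f_def locD)
  ultimately show "\<exists>m f. npath t x m f \<and> lsem t (f m) b \<and> (\<forall>j<m. lsem t (f j) a)" by blast
next
  assume "\<exists>m f. npath t x m f \<and> lsem t (f m) b \<and> (\<forall>j<m. lsem t (f j) a)"
  then obtain m f where f: "npath t x m f" "lsem t (f m) b" "\<forall>j<m. lsem t (f j) a" by blast
  obtain g where g: "inpath t x g" "\<forall>j\<le>m. g j = f j" using npath_extend[OF t x f(1)] by blast
  obtain \<pi> where p: "is_path t \<pi>" "\<forall>j. \<pi> (length x + j) = g j" using path_through[OF t x g(1)] by blast
  have px: "\<pi> (length x) = x" using p(2)[rule_format, of 0] g(1) by (simp add: inpath_def)
  have "sem_p t \<pi> (length x + m) b" using p g f lb by (simp add: locD)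
  moreover have "\<forall>k. length x \<le> k \<and> k < length x + m \<longrightarrow> sem_p t \<pi> k a"
  proof (intro allI impI)
    fix k assume k: "length x \<le> k \<and> k < length x + m"
    then obtain n where "k = length x + n" "n < m" by (metis add_less_cancel_left le_Suc_ex)
    then show "sem_p t \<pi> k a" using p g f la by (simp add: locD)
  qed
  ultimately have "\<exists>j\<ge>length x. sem_p t \<pi> j b \<and> (\<forall>k. length x \<le> k \<and> k < j \<longrightarrow> sem_p t \<pi> k a)"
    by (intro exI[of _ "length x + m"]) auto
  then show "sem_s t x (Ex (Until a b))" using p(1) px by auto
qed

lemma sem_ER:
  assumes t: "is_tree t" and x: "x \<in> fst t" and la: "loc a" and lb: "loc b"
  shows "sem_s t x (Ex (Release a b)) \<longleftrightarrow>
     (\<exists>f. inpath t x f \<and> (\<forall>j. lsem t (f j) b)) \<or>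
     (\<exists>m f. npath t x m f \<and> lsem t (f m) a \<and> lsem t (f m) b \<and> (\<forall>j<m. lsem t (f j) b))"
proof
  assume "sem_s t x (Ex (Release a b))"
  then obtain \<pi> i where p: "is_path t \<pi>" "\<pi> i = x"
    "(\<forall>j\<ge>i. sem_p t \<pi> j b)
   \<or> (\<exists>j\<ge>i. sem_p t \<pi> j a \<and> sem_p t \<pi> j b \<and> (\<forall>k. i \<le> k \<and> k < j \<longrightarrow> sem_p t \<pi> k b))" by auto
  define f where "f n = \<pi> (i + n)" for n
  have ip: "inpath t x f" using p by (simp add: inpath_def f_def is_path_def)
  show "(\<exists>f. inpath t x f \<and> (\<forall>j. lsem t (f j) b)) \<or>
     (\<exists>m f. npath t x m f \<and> lsem t (f m) a \<and> lsem t (f m) b \<and> (\<forall>j<m. lsem t (f j) b))"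
  proof (cases "\<forall>j\<ge>i. sem_p t \<pi> j b")
    case True
    then have "\<forall>j. lsem t (f j) b" using lb by (simp add: f_def locD)
    then show ?thesis using ip by blast
  next
    case False
    then obtain j where j: "j\<ge>i" "sem_p t \<pi> j a" "sem_p t \<pi> j b" "\<forall>k. i \<le> k \<and> k < j \<longrightarrow> sem_p t \<pi> k b"
      using p(3) by blast
    have "npath t x (j - i) f" using p by (simp add: npath_def f_def is_path_def)
    moreover have "lsem t (f (j - i)) a" "lsem t (f (j - i)) b" using j la lb by (simp_all add: f_def locD)
    moreover have "\<forall>n<j-i. lsem t (f n) b" using j lb by (simp add: f_def locD)
    ultimately show ?thesis by blast
  qed
next
  assume A: "(\<exists>f. inpath t x f \<and> (\<forall>j. lsem t (f j) b)) \<or>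
     (\<exists>m f. npath t x m f \<and> lsem t (f m) a \<and> lsem t (f m) b \<and> (\<forall>j<m. lsem t (f j) b))"
  show "sem_s t x (Ex (Release a b))"
  proof (cases "\<exists>f. inpath t x f \<and> (\<forall>j. lsem t (f j) b)")
    case True
    then obtain g where g: "inpath t x g" "\<forall>j. lsem t (g j) b" by blast
    obtain \<pi> where p: "is_path t \<pi>" "\<forall>j. \<pi> (length x + j) = g j" using path_through[OF t x g(1)] by blast
    have px: "\<pi> (length x) = x" using p(2)[rule_format, of 0] g(1) by (simp add: inpath_def)
    have "\<forall>j\<ge>length x. sem_p t \<pi> j b"
    proof (intro allI impI)
      fix j assume "length x \<le> j"
      then obtain n where "j = length x + n" by (metis le_Suc_ex)
      then show "sem_p t \<pi> j b" using p g lb by (simp add: locD)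
    qed
    then show ?thesis using p(1) px by auto
  next
    case False
    then obtain m f where f: "npath t x m f" "lsem t (f m) a" "lsem t (f m) b" "\<forall>j<m. lsem t (f j) b"
      using A by blast
    obtain g where g: "inpath t x g" "\<forall>j\<le>m. g j = f j" using npath_extend[OF t x f(1)] by blast
    obtain \<pi> where p: "is_path t \<pi>" "\<forall>j. \<pi> (length x + j) = g j" using path_through[OF t x g(1)] by blast
    have px: "\<pi> (length x) = x" using p(2)[rule_format, of 0] g(1) by (simp add: inpath_def)
    have "sem_p t \<pi> (length x + m) a" "sem_p t \<pi> (length x + m) b" using p g f la lb by (simp_all add: locD)
    moreover have "\<forall>k. length x \<le> k \<and> k < length x + m \<longrightarrow> sem_p t \<pi> k b"
    proof (intro allI impI)
      fix k assume k: "length x \<le> k \<and> k < length x + m"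
      then obtain n where "k = length x + n" "n < m" by (metis add_less_cancel_left le_Suc_ex)
      then show "sem_p t \<pi> k b" using p g f lb by (simp add: locD)
    qed
    ultimately have "\<exists>j\<ge>length x. sem_p t \<pi> j a \<and> sem_p t \<pi> j b \<and> (\<forall>k. length x \<le> k \<and> k < j \<longrightarrow> sem_p t \<pi> k b)"
      by (intro exI[of _ "length x + m"]) auto
    then show ?thesis using p(1) px by auto
  qed
qed

lemma sem_EY:
  assumes t: "is_tree t" and x: "x \<in> fst t"
  shows "sem_s t x (Ex (Yx (PSt a))) \<longleftrightarrow> x \<noteq> [] \<and> sem_s t (butlast x) a"
proof
  assume "sem_s t x (Ex (Yx (PSt a)))"
  then obtain \<pi> i where p: "is_path t \<pi>" "\<pi> i = x" "0 < i" "sem_s t (\<pi> (i - 1)) a" by auto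
  have li: "length x = i" using is_path_len p by metis
  have "\<pi> (i - 1) = take (i - 1) x" using is_path_take[OF p(1), of "i - 1" i] p by simp
  then have "\<pi> (i - 1) = butlast x" using li by (simp add: butlast_conv_take)
  then show "x \<noteq> [] \<and> sem_s t (butlast x) a" using p li by auto
next
  assume A: "x \<noteq> [] \<and> sem_s t (butlast x) a"
  obtain \<pi> where p: "is_path t \<pi>" "\<pi> (length x) = x" using exists_path_through t x by blast
  have "\<pi> (length x - 1) = take (length x - 1) x" using is_path_take[OF p(1), of "length x - 1" "length x"] p by simp
  then have "\<pi> (length x - 1) = butlast x" by (simp add: butlast_conv_take)
  then show "sem_s t x (Ex (Yx (PSt a)))" using p A by (auto intro!: exI[of _ \<pi>] exI[of _ "length x"])
qed

lemma sem_ES: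
  assumes t: "is_tree t" and x: "x \<in> fst t"
  shows "sem_s t x (Ex (Since (PSt a) (PSt b))) \<longleftrightarrow>
    (\<exists>s\<le>length x. sem_s t (take (length x - s) x) b \<and> (\<forall>j<s. sem_s t (take (length x - j) x) a))"
proof
  assume "sem_s t x (Ex (Since (PSt a) (PSt b)))"
  then obtain \<pi> i j where p: "is_path t \<pi>" "\<pi> i = x" "j \<le> i" "sem_s t (\<pi> j) b"
     "\<forall>k. j < k \<and> k \<le> i \<longrightarrow> sem_s t (\<pi> k) a" by auto
  have li: "length x = i" using is_path_len p by metis
  have tk: "\<And>k. k \<le> i \<Longrightarrow> \<pi> k = take k x" using is_path_take[OF p(1)] p(2) by blast
  show "\<exists>s\<le>length x. sem_s t (take (length x - s) x) b \<and> (\<forall>j<s. sem_s t (take (length x - j) x) a)"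
  proof (intro exI[of _ "i - j"] conjI allI impI)
    show "i - j \<le> length x" using li by simp
    show "sem_s t (take (length x - (i - j)) x) b" using p tk li by simp
    fix j' assume "j' < i - j"
    then show "sem_s t (take (length x - j') x) a" using p(5)[rule_format, of "i - j'"] tk[of "i - j'"] li by simp
  qed
next
  assume "\<exists>s\<le>length x. sem_s t (take (length x - s) x) b \<and> (\<forall>j<s. sem_s t (take (length x - j) x) a)"
  then obtain s where s: "s \<le> length x" "sem_s t (take (length x - s) x) b" "\<forall>j<s. sem_s t (take (length x - j) x) a" by blast
  obtain \<pi> where p: "is_path t \<pi>" "\<pi> (length x) = x" using exists_path_through t x by blast
  have tk: "\<And>k. k \<le> length x \<Longrightarrow> \<pi> k = take k x" using is_path_take[OF p(1)] p(2) by metis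
  have "\<forall>k. length x - s < k \<and> k \<le> length x \<longrightarrow> sem_s t (\<pi> k) a"
  proof (intro allI impI)
    fix k assume k: "length x - s < k \<and> k \<le> length x"
    then have "length x - k < s" "length x - (length x - k) = k" using s by auto
    then show "sem_s t (\<pi> k) a" using s(3) tk k by metis
  qed
  moreover have "sem_s t (\<pi> (length x - s)) b" using tk s by simp
  moreover have "length x - s \<le> length x" by simp
  ultimately have "\<exists>j\<le>length x. sem_s t (\<pi> j) b \<and> (\<forall>k. j < k \<and> k \<le> length x \<longrightarrow> sem_s t (\<pi> k) a)"
    by blast
  then show "sem_s t x (Ex (Since (PSt a) (PSt b)))" using p by auto
qed

lemma sem_Eloc:
  assumes t: "is_tree t" and x: "x \<in> fst t" and l: "loc \<psi>"
  shows "sem_s t x (Ex \<psi>) \<longleftrightarrow> lsem t x \<psi>"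
proof -
  obtain \<pi> where p: "is_path t \<pi>" "\<pi> (length x) = x" using exists_path_through t x by blast
  show ?thesis
  proof
    assume "sem_s t x (Ex \<psi>)"
    then obtain \<pi>' i where "is_path t \<pi>'" "\<pi>' i = x" "sem_p t \<pi>' i \<psi>" by auto
    then show "lsem t x \<psi>" using l by (simp add: locD)
  next
    assume "lsem t x \<psi>"
    then have "sem_p t \<pi> (length x) \<psi>" using p l by (simp add: locD)
    then show "sem_s t x (Ex \<psi>)" using p by auto
  qed
qed


section \<open>Trees generated by type systems\<close>

fun walk :: "('t \<Rightarrow> 't list) \<Rightarrow> 't \<Rightarrow> nat list \<Rightarrow> 't option" where
  "walk ch s [] = Some s"
| "walk ch s (i # w) = (if i < length (ch s) then walk ch (ch s ! i) w else None)"

definition tnodes :: "('t \<Rightarrow> 't list) \<Rightarrow> 't \<Rightarrow> nat list set" where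
  "tnodes ch r = {w. walk ch r w \<noteq> None}"

definition tyof :: "('t \<Rightarrow> 't list) \<Rightarrow> 't \<Rightarrow> nat list \<Rightarrow> 't" where
  "tyof ch r w = the (walk ch r w)"

definition mk :: "('t \<Rightarrow> 't list) \<Rightarrow> ('t \<Rightarrow> 'ap set) \<Rightarrow> 't \<Rightarrow> 'ap tree" where
  "mk ch lb r = (tnodes ch r, \<lambda>w. lb (tyof ch r w))"

lemma fst_mk[simp]: "fst (mk ch lb r) = tnodes ch r" by (simp add: mk_def)
lemma snd_mk[simp]: "snd (mk ch lb r) w = lb (tyof ch r w)" by (simp add: mk_def)

lemma walk_snoc: "walk ch s (w @ [i]) = (case walk ch s w of None \<Rightarrow> None
   | Some \<sigma> \<Rightarrow> if i < length (ch \<sigma>) then Some (ch \<sigma> ! i) else None)"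
  by (induction w arbitrary: s) auto

lemma root_tnodes[simp]: "[] \<in> tnodes ch r" by (simp add: tnodes_def)
lemma tyof_root[simp]: "tyof ch r [] = r" by (simp add: tyof_def)

lemma snoc_tnodes: "w @ [i] \<in> tnodes ch r \<longleftrightarrow> w \<in> tnodes ch r \<and> i < length (ch (tyof ch r w))"
  by (auto simp: tnodes_def tyof_def walk_snoc split: option.splits if_splits)

lemma tyof_snoc: "w \<in> tnodes ch r \<Longrightarrow> i < length (ch (tyof ch r w)) \<Longrightarrow> tyof ch r (w @ [i]) = ch (tyof ch r w) ! i"
  by (auto simp: tnodes_def tyof_def walk_snoc split: option.splits)

lemma children_mk: "children (tnodes ch r) w = {w @ [i] | i. i < length (ch (tyof ch r w)) \<and> w \<in> tnodes ch r}"
  by (auto simp: children_def snoc_tnodes)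

lemma is_tree_mk: "\<forall>s. ch s \<noteq> [] \<Longrightarrow> is_tree (mk ch lb r)"
proof -
  assume ne: "\<forall>s. ch s \<noteq> []"
  have "finite (children (tnodes ch r) u)" for u
  proof -
    have "children (tnodes ch r) u \<subseteq> (\<lambda>i. u @ [i]) ` {..<length (ch (tyof ch r u))}"
      by (auto simp: children_mk)
    then show ?thesis using finite_subset by blast
  qed
  moreover have "u \<in> tnodes ch r \<Longrightarrow> children (tnodes ch r) u \<noteq> {}" for u
    using ne by (auto simp: children_mk)
  ultimately show ?thesis by (auto simp: is_tree_def Let_def snoc_tnodes)
qed

lemma card_children_mk:
  assumes "x \<in> tnodes ch r"
  shows "card {v \<in> children (tnodes ch r) x. P v} = card {i. i < length (ch (tyof ch r x)) \<and> P (x @ [i])}"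
proof -
  have "{v \<in> children (tnodes ch r) x. P v} = (\<lambda>i. x @ [i]) ` {i. i < length (ch (tyof ch r x)) \<and> P (x @ [i])}"
    using assms by (auto simp: children_mk)
  moreover have "inj (\<lambda>i. x @ [i])" by (auto simp: inj_def)
  ultimately show ?thesis by (simp add: card_image inj_on_subset)
qed

lemma card_match:
  assumes "bij_betw h A B" "\<forall>i\<in>A. P i \<longleftrightarrow> Q (h i)"
  shows "card {i\<in>A. P i} = card {j\<in>B. Q j}"
proof -
  have "bij_betw h {i\<in>A. P i} {j\<in>B. Q j}"
    using assms unfolding bij_betw_def inj_on_def by (auto simp: image_def)
  then show ?thesis by (rule bij_betw_same_card)
qed

definition tp :: "('t \<Rightarrow> 't list) \<Rightarrow> 't \<Rightarrow> nat \<Rightarrow> (nat \<Rightarrow> 't) \<Rightarrow> bool" where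
  "tp ch s m g \<longleftrightarrow> g 0 = s \<and> (\<forall>j<m. g (Suc j) \<in> set (ch (g j)))"

definition itp :: "('t \<Rightarrow> 't list) \<Rightarrow> 't \<Rightarrow> (nat \<Rightarrow> 't) \<Rightarrow> bool" where
  "itp ch s g \<longleftrightarrow> g 0 = s \<and> (\<forall>j. g (Suc j) \<in> set (ch (g j)))"

lemma npath_tp:
  assumes "x \<in> tnodes ch r" "npath (mk ch lb r) x m f"
  shows "tp ch (tyof ch r x) m (\<lambda>j. tyof ch r (f j)) \<and> (\<forall>j\<le>m. f j \<in> tnodes ch r)"
proof -
  have A: "j \<le> m \<Longrightarrow> f j \<in> tnodes ch r" for j
  proof (induction j)
    case 0 then show ?case using assms by (simp add: npath_def)
  next
    case (Suc j)
    then have "f (Suc j) \<in> children (tnodes ch r) (f j)" using assms by (simp add: npath_def)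
    then show ?case using children_sub by blast
  qed
  have "j < m \<Longrightarrow> tyof ch r (f (Suc j)) \<in> set (ch (tyof ch r (f j)))" for j
  proof -
    assume j: "j < m"
    then have "f (Suc j) \<in> children (tnodes ch r) (f j)" using assms by (simp add: npath_def)
    then obtain i where i: "f (Suc j) = f j @ [i]" "i < length (ch (tyof ch r (f j)))" "f j \<in> tnodes ch r"
      by (auto simp: children_mk)
    then show ?thesis by (simp add: tyof_snoc)
  qed
  then show ?thesis using A assms by (simp add: tp_def npath_def)
qed

lemma inpath_itp:
  assumes "x \<in> tnodes ch r" "inpath (mk ch lb r) x f"
  shows "itp ch (tyof ch r x) (\<lambda>j. tyof ch r (f j)) \<and> (\<forall>j. f j \<in> tnodes ch r)"
proof -
  have A: "f j \<in> tnodes ch r" for j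
  proof (induction j)
    case 0 then show ?case using assms by (simp add: inpath_def)
  next
    case (Suc j)
    then have "f (Suc j) \<in> children (tnodes ch r) (f j)" using assms by (simp add: inpath_def)
    then show ?case using children_sub by blast
  qed
  have "tyof ch r (f (Suc j)) \<in> set (ch (tyof ch r (f j)))" for j
  proof -
    have "f (Suc j) \<in> children (tnodes ch r) (f j)" using assms by (simp add: inpath_def)
    then obtain i where i: "f (Suc j) = f j @ [i]" "i < length (ch (tyof ch r (f j)))" "f j \<in> tnodes ch r"
      by (auto simp: children_mk)
    then show ?thesis by (simp add: tyof_snoc)
  qed
  then show ?thesis using A assms by (simp add: itp_def inpath_def)
qed

primrec lift :: "('t \<Rightarrow> 't list) \<Rightarrow> nat list \<Rightarrow> (nat \<Rightarrow> 't) \<Rightarrow> nat \<Rightarrow> nat list" where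
  "lift ch x g 0 = x"
| "lift ch x g (Suc j) = lift ch x g j @ [SOME i. i < length (ch (g j)) \<and> ch (g j) ! i = g (Suc j)]"

lemma lift_ok:
  assumes "x \<in> tnodes ch r" "tyof ch r x = g 0" "\<forall>j<m. g (Suc j) \<in> set (ch (g j))" "j \<le> m"
  shows "lift ch x g j \<in> tnodes ch r \<and> tyof ch r (lift ch x g j) = g j"
  using assms(4)
proof (induction j)
  case 0 then show ?case using assms by simp
next
  case (Suc j)
  then have IH: "lift ch x g j \<in> tnodes ch r" "tyof ch r (lift ch x g j) = g j" by auto
  have "g (Suc j) \<in> set (ch (g j))" using assms(3) Suc by simp
  then have "\<exists>i. i < length (ch (g j)) \<and> ch (g j) ! i = g (Suc j)" by (simp add: in_set_conv_nth)
  then have S: "(SOME i. i < length (ch (g j)) \<and> ch (g j) ! i = g (Suc j)) < length (ch (g j)) \<and>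
     ch (g j) ! (SOME i. i < length (ch (g j)) \<and> ch (g j) ! i = g (Suc j)) = g (Suc j)"
    by (rule someI_ex)
  show ?case using IH S by (simp add: snoc_tnodes tyof_snoc)
qed

lemma tp_npath:
  assumes "x \<in> tnodes ch r" "tp ch (tyof ch r x) m g"
  shows "\<exists>f. npath (mk ch lb r) x m f \<and> (\<forall>j\<le>m. f j \<in> tnodes ch r \<and> tyof ch r (f j) = g j)"
proof (intro exI conjI)
  have L: "j \<le> m \<Longrightarrow> lift ch x g j \<in> tnodes ch r \<and> tyof ch r (lift ch x g j) = g j" for j
    using lift_ok[of x ch r g m j] assms by (simp add: tp_def)
  show "\<forall>j\<le>m. lift ch x g j \<in> tnodes ch r \<and> tyof ch r (lift ch x g j) = g j" using L by blast
  show "npath (mk ch lb r) x m (lift ch x g)"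
    unfolding npath_def
  proof (intro conjI allI impI)
    show "lift ch x g 0 = x" by simp
    fix j assume j: "j < m"
    have "lift ch x g (Suc j) \<in> tnodes ch r" using L[of "Suc j"] j by linarith
    moreover have "lift ch x g (Suc j) = lift ch x g j @ [SOME i. i < length (ch (g j)) \<and> ch (g j) ! i = g (Suc j)]" by simp
    ultimately show "lift ch x g (Suc j) \<in> children (fst (mk ch lb r)) (lift ch x g j)"
      by (auto simp: children_def)
  qed
qed

lemma itp_inpath:
  assumes "x \<in> tnodes ch r" "itp ch (tyof ch r x) g"
  shows "\<exists>f. inpath (mk ch lb r) x f \<and> (\<forall>j. f j \<in> tnodes ch r \<and> tyof ch r (f j) = g j)"
proof (intro exI conjI)
  have L: "lift ch x g j \<in> tnodes ch r \<and> tyof ch r (lift ch x g j) = g j" for j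
    using lift_ok[of x ch r g "Suc j" j] assms by (simp add: itp_def)
  show "\<forall>j. lift ch x g j \<in> tnodes ch r \<and> tyof ch r (lift ch x g j) = g j" using L by blast
  show "inpath (mk ch lb r) x (lift ch x g)"
    unfolding inpath_def
  proof (intro conjI allI)
    show "lift ch x g 0 = x" by simp
    fix j
    have "lift ch x g (Suc j) \<in> tnodes ch r" using L by blast
    moreover have "lift ch x g (Suc j) = lift ch x g j @ [SOME i. i < length (ch (g j)) \<and> ch (g j) ! i = g (Suc j)]" by simp
    ultimately show "lift ch x g (Suc j) \<in> children (fst (mk ch lb r)) (lift ch x g j)"
      by (auto simp: children_def)
  qed
qed


primrec sz :: "'ap sform \<Rightarrow> nat" and szp :: "'ap pform \<Rightarrow> nat" where
  "sz (Ap p) = 0"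
| "sz (SNeg \<phi>) = sz \<phi>"
| "sz (SOr \<phi> \<psi>) = max (sz \<phi>) (sz \<psi>)"
| "sz (Dn n \<phi>) = Suc (sz \<phi>)"
| "sz (Ex \<psi>) = Suc (szp \<psi>)"
| "szp (PSt \<phi>) = sz \<phi>"
| "szp (PNeg \<psi>) = szp \<psi>"
| "szp (POr a b) = max (szp a) (szp b)"
| "szp (Nx \<psi>) = szp \<psi>"
| "szp (Yx \<psi>) = szp \<psi>"
| "szp (Until a b) = max (szp a) (szp b)"
| "szp (Release a b) = max (szp a) (szp b)"
| "szp (Since a b) = max (szp a) (szp b)"

definition flipR :: "(nat \<Rightarrow> 't \<Rightarrow> 't \<Rightarrow> bool) \<Rightarrow> nat \<Rightarrow> 't \<Rightarrow> 't \<Rightarrow> bool" where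
  "flipR R k s t = R k t s"

definition gEU :: "('t \<Rightarrow> 't list) \<Rightarrow> (nat \<Rightarrow> 't \<Rightarrow> 't \<Rightarrow> bool) \<Rightarrow> bool" where
  "gEU ch R \<longleftrightarrow> (\<forall>k s t m f. R (Suc k) s t \<longrightarrow> tp ch s m f \<longrightarrow>
     (\<exists>l g. tp ch t l g \<and> R k (f m) (g l) \<and> (\<forall>j<l. \<exists>i<m. R k (f i) (g j))))"

definition gEG :: "('t \<Rightarrow> 't list) \<Rightarrow> (nat \<Rightarrow> 't \<Rightarrow> 't \<Rightarrow> bool) \<Rightarrow> bool" where
  "gEG ch R \<longleftrightarrow> (\<forall>k s t f. R (Suc k) s t \<longrightarrow> itp ch s f \<longrightarrow>
     (\<exists>g. itp ch t g \<and> (\<forall>j. \<exists>i. R k (f i) (g j))))"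

definition gX :: "('t \<Rightarrow> 't list) \<Rightarrow> (nat \<Rightarrow> 't \<Rightarrow> 't \<Rightarrow> bool) \<Rightarrow> bool" where
  "gX ch R \<longleftrightarrow> (\<forall>k s t. R (Suc k) s t \<longrightarrow>
     (\<exists>h. bij_betw h {..<length (ch s)} {..<length (ch t)} \<and> (\<forall>i<length (ch s). R k (ch s ! i) (ch t ! h i))))"

definition glab :: "('t \<Rightarrow> 'ap set) \<Rightarrow> (nat \<Rightarrow> 't \<Rightarrow> 't \<Rightarrow> bool) \<Rightarrow> bool" where
  "glab lb R \<longleftrightarrow> (\<forall>k s t. R k s t \<longrightarrow> lb s = lb t)"

lemma EU_transfer:
  assumes U: "gEU ch R"
    and x: "x \<in> tnodes ch r1" and y: "y \<in> tnodes ch r2"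
    and R: "R (Suc k) (tyof ch r1 x) (tyof ch r2 y)"
    and IH1: "\<forall>u v. u \<in> tnodes ch r1 \<longrightarrow> v \<in> tnodes ch r2 \<longrightarrow> R k (tyof ch r1 u) (tyof ch r2 v) \<longrightarrow> (P1 u \<longleftrightarrow> Q1 v)"
    and IH2: "\<forall>u v. u \<in> tnodes ch r1 \<longrightarrow> v \<in> tnodes ch r2 \<longrightarrow> R k (tyof ch r1 u) (tyof ch r2 v) \<longrightarrow> (P2 u \<longleftrightarrow> Q2 v)"
    and A: "\<exists>m f. npath (mk ch lb1 r1) x m f \<and> P2 (f m) \<and> (\<forall>j<m. P1 (f j))"
  shows "\<exists>m f. npath (mk ch lb2 r2) y m f \<and> Q2 (f m) \<and> (\<forall>j<m. Q1 (f j))"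
proof -
  obtain m f where f: "npath (mk ch lb1 r1) x m f" "P2 (f m)" "\<forall>j<m. P1 (f j)" using A by blast
  have T: "tp ch (tyof ch r1 x) m (\<lambda>j. tyof ch r1 (f j))" "\<forall>j\<le>m. f j \<in> tnodes ch r1"
    using npath_tp[OF x f(1)] by auto
  obtain l g where g: "tp ch (tyof ch r2 y) l g" "R k (tyof ch r1 (f m)) (g l)"
    "\<forall>j<l. \<exists>i<m. R k (tyof ch r1 (f i)) (g j)"
    using U R T(1) unfolding gEU_def by blast
  obtain f2 where f2: "npath (mk ch lb2 r2) y l f2" "\<forall>j\<le>l. f2 j \<in> tnodes ch r2 \<and> tyof ch r2 (f2 j) = g j"
    using tp_npath[OF y g(1)] by blast
  have "Q2 (f2 l)" using IH2 T(2) f2(2) g(2) f(2) by auto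
  moreover have "\<forall>j<l. Q1 (f2 j)"
  proof (intro allI impI)
    fix j assume j: "j < l"
    then obtain i where i: "i < m" "R k (tyof ch r1 (f i)) (g j)" using g(3) by blast
    have a: "f i \<in> tnodes ch r1" "P1 (f i)" using T(2) f(3) i by auto
    have b: "f2 j \<in> tnodes ch r2" "tyof ch r2 (f2 j) = g j" using f2(2) j by auto
    show "Q1 (f2 j)" using IH1[rule_format, OF a(1) b(1)] a(2) b(2) i(2) by simp
  qed
  ultimately show ?thesis using f2(1) by blast
qed

lemma EG_transfer:
  assumes G: "gEG ch R"
    and x: "x \<in> tnodes ch r1" and y: "y \<in> tnodes ch r2"
    and R: "R (Suc k) (tyof ch r1 x) (tyof ch r2 y)"
    and IH: "\<forall>u v. u \<in> tnodes ch r1 \<longrightarrow> v \<in> tnodes ch r2 \<longrightarrow> R k (tyof ch r1 u) (tyof ch r2 v) \<longrightarrow> (P u \<longleftrightarrow> Q v)"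
    and A: "\<exists>f. inpath (mk ch lb1 r1) x f \<and> (\<forall>j. P (f j))"
  shows "\<exists>f. inpath (mk ch lb2 r2) y f \<and> (\<forall>j. Q (f j))"
proof -
  obtain f where f: "inpath (mk ch lb1 r1) x f" "\<forall>j. P (f j)" using A by blast
  have T: "itp ch (tyof ch r1 x) (\<lambda>j. tyof ch r1 (f j))" "\<forall>j. f j \<in> tnodes ch r1"
    using inpath_itp[OF x f(1)] by auto
  obtain g where g: "itp ch (tyof ch r2 y) g" "\<forall>j. \<exists>i. R k (tyof ch r1 (f i)) (g j)"
    using G R T(1) unfolding gEG_def by blast
  obtain f2 where f2: "inpath (mk ch lb2 r2) y f2" "\<forall>j. f2 j \<in> tnodes ch r2 \<and> tyof ch r2 (f2 j) = g j"
    using itp_inpath[OF y g(1)] by blast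
  have "\<forall>j. Q (f2 j)"
  proof
    fix j
    obtain i where i: "R k (tyof ch r1 (f i)) (g j)" using g(2) by blast
    have a: "f i \<in> tnodes ch r1" "P (f i)" using T(2) f(2) by auto
    have b: "f2 j \<in> tnodes ch r2" "tyof ch r2 (f2 j) = g j" using f2(2) by auto
    show "Q (f2 j)" using IH[rule_format, OF a(1) b(1)] a(2) b(2) i by simp
  qed
  then show ?thesis using f2(1) by blast
qed

lemma EX_transfer:
  assumes X: "gX ch R"
    and x: "x \<in> tnodes ch r1" and y: "y \<in> tnodes ch r2"
    and R: "R (Suc k) (tyof ch r1 x) (tyof ch r2 y)"
    and IH: "\<forall>u v. u \<in> tnodes ch r1 \<longrightarrow> v \<in> tnodes ch r2 \<longrightarrow> R k (tyof ch r1 u) (tyof ch r2 v) \<longrightarrow> (P u \<longleftrightarrow> Q v)"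
  shows "(\<exists>c\<in>children (tnodes ch r1) x. P c) \<longleftrightarrow> (\<exists>c\<in>children (tnodes ch r2) y. Q c)"
    and "card {c\<in>children (tnodes ch r1) x. P c} = card {c\<in>children (tnodes ch r2) y. Q c}"
proof -
  obtain h where h: "bij_betw h {..<length (ch (tyof ch r1 x))} {..<length (ch (tyof ch r2 y))}"
    "\<forall>i<length (ch (tyof ch r1 x)). R k (ch (tyof ch r1 x) ! i) (ch (tyof ch r2 y) ! h i)"
    using X R unfolding gX_def by blast
  have E: "\<forall>i\<in>{..<length (ch (tyof ch r1 x))}. P (x @ [i]) \<longleftrightarrow> Q (y @ [h i])"
  proof
    fix i assume i: "i \<in> {..<length (ch (tyof ch r1 x))}"
    then have hi: "h i < length (ch (tyof ch r2 y))" using h(1) by (auto simp: bij_betw_def)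
    show "P (x @ [i]) \<longleftrightarrow> Q (y @ [h i])"
      using IH[rule_format, of "x @ [i]" "y @ [h i]"] i hi x y h(2)
      by (simp add: snoc_tnodes tyof_snoc)
  qed
  have C: "card {i\<in>{..<length (ch (tyof ch r1 x))}. P (x @ [i])} = card {j\<in>{..<length (ch (tyof ch r2 y))}. Q (y @ [j])}"
    by (rule card_match[OF h(1) E])
  show "card {c\<in>children (tnodes ch r1) x. P c} = card {c\<in>children (tnodes ch r2) y. Q c}"
    using C card_children_mk[OF x, of P] card_children_mk[OF y, of Q] by simp
  have "(\<exists>i<length (ch (tyof ch r1 x)). P (x @ [i])) \<longleftrightarrow> (\<exists>j<length (ch (tyof ch r2 y)). Q (y @ [j]))"
  proof
    assume "\<exists>i<length (ch (tyof ch r1 x)). P (x @ [i])"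
    then obtain i where "i<length (ch (tyof ch r1 x))" "P (x @ [i])" by blast
    then show "\<exists>j<length (ch (tyof ch r2 y)). Q (y @ [j])" using E h(1) by (auto simp: bij_betw_def)
  next
    assume "\<exists>j<length (ch (tyof ch r2 y)). Q (y @ [j])"
    then obtain j where j: "j<length (ch (tyof ch r2 y))" "Q (y @ [j])" by blast
    then have "j \<in> h ` {..<length (ch (tyof ch r1 x))}" using h(1) by (simp add: bij_betw_def)
    then obtain i where "i<length (ch (tyof ch r1 x))" "h i = j" by auto
    then show "\<exists>i<length (ch (tyof ch r1 x)). P (x @ [i])" using E j by auto
  qed
  then show "(\<exists>c\<in>children (tnodes ch r1) x. P c) \<longleftrightarrow> (\<exists>c\<in>children (tnodes ch r2) y. Q c)"
    using x y by (auto simp: children_mk)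
qed


definition EqS :: "('t \<Rightarrow> 't list) \<Rightarrow> ('t \<Rightarrow> 'ap set) \<Rightarrow> 't \<Rightarrow> 't \<Rightarrow> (nat \<Rightarrow> 't \<Rightarrow> 't \<Rightarrow> bool) \<Rightarrow> 'ap sform \<Rightarrow> bool" where
  "EqS ch lb r1 r2 R \<phi> \<longleftrightarrow> (\<forall>k x y. x \<in> tnodes ch r1 \<longrightarrow> y \<in> tnodes ch r2 \<longrightarrow> R k (tyof ch r1 x) (tyof ch r2 y) \<longrightarrow>
     pc_s \<phi> \<longrightarrow> past_free_s \<phi> \<longrightarrow> sz \<phi> \<le> k \<longrightarrow> sem_s (mk ch lb r1) x \<phi> = sem_s (mk ch lb r2) y \<phi>)"

definition EqP :: "('t \<Rightarrow> 't list) \<Rightarrow> ('t \<Rightarrow> 'ap set) \<Rightarrow> 't \<Rightarrow> 't \<Rightarrow> (nat \<Rightarrow> 't \<Rightarrow> 't \<Rightarrow> bool) \<Rightarrow> 'ap pform \<Rightarrow> bool" where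
  "EqP ch lb r1 r2 R \<psi> \<longleftrightarrow> (\<forall>k x y. x \<in> tnodes ch r1 \<longrightarrow> y \<in> tnodes ch r2 \<longrightarrow> R k (tyof ch r1 x) (tyof ch r2 y) \<longrightarrow>
     pc_p \<psi> \<longrightarrow> past_free_p \<psi> \<longrightarrow> szp \<psi> \<le> k \<longrightarrow> lsem (mk ch lb r1) x \<psi> = lsem (mk ch lb r2) y \<psi>)"

definition EqE :: "('t \<Rightarrow> 't list) \<Rightarrow> ('t \<Rightarrow> 'ap set) \<Rightarrow> 't \<Rightarrow> 't \<Rightarrow> (nat \<Rightarrow> 't \<Rightarrow> 't \<Rightarrow> bool) \<Rightarrow> 'ap pform \<Rightarrow> bool" where
  "EqE ch lb r1 r2 R \<psi> \<longleftrightarrow> EqS ch lb r1 r2 R (Ex \<psi>)"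

lemma flipR_simp[simp]: "flipR R k s t = R k t s" by (simp add: flipR_def)

theorem ctl_game:
  assumes ne: "\<forall>s. ch s \<noteq> []" and L: "glab lb R" and X: "gX ch R"
    and U1: "gEU ch R" and U2: "gEU ch (flipR R)" and G1: "gEG ch R" and G2: "gEG ch (flipR R)"
  shows "EqS ch lb r1 r2 R \<phi>"
proof (induction \<phi> rule: sform.induct[where ?P2.0 = "\<lambda>\<psi>. EqP ch lb r1 r2 R \<psi> \<and> EqE ch lb r1 r2 R \<psi>"])
  have T1: "is_tree (mk ch lb r1)" by (rule is_tree_mk[OF ne])
  have T2: "is_tree (mk ch lb r2)" by (rule is_tree_mk[OF ne])
  {
    case (Ap p)
    show ?case using L by (auto simp: EqS_def glab_def)
  next
    case (SNeg \<phi>)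
    then show ?case by (auto simp: EqS_def)
  next
    case (SOr \<phi>1 \<phi>2)
    then show ?case unfolding EqS_def by (metis max.bounded_iff pc_s.simps(3) past_free_s.simps(3) sem_s.simps(3) sz.simps(3))
  next
    case (Dn n \<phi>)
    show ?case unfolding EqS_def
    proof (intro allI impI)
      fix k x y
      assume x: "x \<in> tnodes ch r1" and y: "y \<in> tnodes ch r2" and R: "R k (tyof ch r1 x) (tyof ch r2 y)"
        and pc: "pc_s (Dn n \<phi>)" and pf: "past_free_s (Dn n \<phi>)" and s: "sz (Dn n \<phi>) \<le> k"
      then obtain k' where k: "k = Suc k'" "sz \<phi> \<le> k'" by (cases k) auto
      have "card {c\<in>children (tnodes ch r1) x. sem_s (mk ch lb r1) c \<phi>} = card {c\<in>children (tnodes ch r2) y. sem_s (mk ch lb r2) c \<phi>}"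
        by (rule EX_transfer(2)[OF X x y R[unfolded k]]) (use Dn pc pf k in \<open>auto simp: EqS_def\<close>)
      then show "sem_s (mk ch lb r1) x (Dn n \<phi>) = sem_s (mk ch lb r2) y (Dn n \<phi>)" by simp
    qed
  next
    case (Ex \<psi>)
    then show ?case by (simp add: EqE_def)
  next
    case (PSt \<phi>)
    have P: "EqP ch lb r1 r2 R (PSt \<phi>)" using PSt by (simp add: EqP_def EqS_def)
    have E: "EqE ch lb r1 r2 R (PSt \<phi>)" unfolding EqE_def EqS_def
    proof (intro allI impI)
      fix k x y
      assume x: "x \<in> tnodes ch r1" and y: "y \<in> tnodes ch r2" and R: "R k (tyof ch r1 x) (tyof ch r2 y)"
        and pc: "pc_s (Ex (PSt \<phi>))" and pf: "past_free_s (Ex (PSt \<phi>))" and s: "sz (Ex (PSt \<phi>)) \<le> k"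
      have "sem_s (mk ch lb r1) x (Ex (PSt \<phi>)) = sem_s (mk ch lb r1) x \<phi>" using sem_Eloc[OF T1 _ loc_PSt[of \<phi>], of x] x by simp
      moreover have "sem_s (mk ch lb r2) y (Ex (PSt \<phi>)) = sem_s (mk ch lb r2) y \<phi>" using sem_Eloc[OF T2 _ loc_PSt[of \<phi>], of y] y by simp
      moreover have "sem_s (mk ch lb r1) x \<phi> = sem_s (mk ch lb r2) y \<phi>"
        using PSt x y R pc pf s by (auto simp: EqS_def)
      ultimately show "sem_s (mk ch lb r1) x (Ex (PSt \<phi>)) = sem_s (mk ch lb r2) y (Ex (PSt \<phi>))" by simp
    qed
    show ?case using P E by simp
  next
    case (PNeg \<psi>)
    have P: "EqP ch lb r1 r2 R (PNeg \<psi>)" using PNeg by (simp add: EqP_def)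
    have E: "EqE ch lb r1 r2 R (PNeg \<psi>)" unfolding EqE_def EqS_def
    proof (intro allI impI)
      fix k x y
      assume x: "x \<in> tnodes ch r1" and y: "y \<in> tnodes ch r2" and R: "R k (tyof ch r1 x) (tyof ch r2 y)"
        and pc: "pc_s (Ex (PNeg \<psi>))" and pf: "past_free_s (Ex (PNeg \<psi>))" and s: "sz (Ex (PNeg \<psi>)) \<le> k"
      have l: "loc (PNeg \<psi>)" using loc_ctl[of "PNeg \<psi>"] pc pf by simp
      show "sem_s (mk ch lb r1) x (Ex (PNeg \<psi>)) = sem_s (mk ch lb r2) y (Ex (PNeg \<psi>))"
        using sem_Eloc[OF T1 _ l, of x] sem_Eloc[OF T2 _ l, of y] x y P R pc pf s by (auto simp: EqP_def)
    qed
    show ?case using P E by simp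
  next
    case (POr \<psi>1 \<psi>2)
    have P: "EqP ch lb r1 r2 R (POr \<psi>1 \<psi>2)" using POr unfolding EqP_def
      by (metis lsem.simps(3) max.bounded_iff pc_p.simps(3) past_free_p.simps(3) szp.simps(3))
    have E: "EqE ch lb r1 r2 R (POr \<psi>1 \<psi>2)" unfolding EqE_def EqS_def
    proof (intro allI impI)
      fix k x y
      assume x: "x \<in> tnodes ch r1" and y: "y \<in> tnodes ch r2" and R: "R k (tyof ch r1 x) (tyof ch r2 y)"
        and pc: "pc_s (Ex (POr \<psi>1 \<psi>2))" and pf: "past_free_s (Ex (POr \<psi>1 \<psi>2))" and s: "sz (Ex (POr \<psi>1 \<psi>2)) \<le> k"
      have l: "loc (POr \<psi>1 \<psi>2)" using loc_ctl[of "POr \<psi>1 \<psi>2"] pc pf by simp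
      have pcp: "pc_p (POr \<psi>1 \<psi>2)" using pc by simp
      have pfp: "past_free_p (POr \<psi>1 \<psi>2)" using pf by simp
      have sp: "szp (POr \<psi>1 \<psi>2) \<le> k" using s by (simp add: max_def split: if_splits)
      have "lsem (mk ch lb r1) x (POr \<psi>1 \<psi>2) = lsem (mk ch lb r2) y (POr \<psi>1 \<psi>2)"
        using P[unfolded EqP_def, rule_format, OF x y R pcp pfp sp] .
      then show "sem_s (mk ch lb r1) x (Ex (POr \<psi>1 \<psi>2)) = sem_s (mk ch lb r2) y (Ex (POr \<psi>1 \<psi>2))"
        using sem_Eloc[OF T1 _ l, of x] sem_Eloc[OF T2 _ l, of y] x y by simp
    qed
    show ?case using P E by simp
  next
    case (Nx \<psi>)
    have P: "EqP ch lb r1 r2 R (Nx \<psi>)" by (simp add: EqP_def)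
    have E: "EqE ch lb r1 r2 R (Nx \<psi>)" unfolding EqE_def EqS_def
    proof (intro allI impI)
      fix k x y
      assume x: "x \<in> tnodes ch r1" and y: "y \<in> tnodes ch r2" and R: "R k (tyof ch r1 x) (tyof ch r2 y)"
        and pc: "pc_s (Ex (Nx \<psi>))" and pf: "past_free_s (Ex (Nx \<psi>))" and s: "sz (Ex (Nx \<psi>)) \<le> k"
      then obtain k' where k: "k = Suc k'" "szp \<psi> \<le> k'" by (cases k) auto
      have l: "loc \<psi>" using loc_ctl[of \<psi>] pc pf by simp
      have "(\<exists>c\<in>children (tnodes ch r1) x. lsem (mk ch lb r1) c \<psi>) \<longleftrightarrow> (\<exists>c\<in>children (tnodes ch r2) y. lsem (mk ch lb r2) c \<psi>)"
        by (rule EX_transfer(1)[OF X x y R[unfolded k]]) (use Nx pc pf k in \<open>auto simp: EqP_def\<close>)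
      then show "sem_s (mk ch lb r1) x (Ex (Nx \<psi>)) = sem_s (mk ch lb r2) y (Ex (Nx \<psi>))"
        using sem_EX[OF T1 _ l, of x] sem_EX[OF T2 _ l, of y] x y by simp
    qed
    show ?case using P E by simp
  next
    case (Yx \<psi>)
    show ?case by (simp add: EqP_def EqE_def EqS_def)
  next
    case (Since \<psi>1 \<psi>2)
    show ?case by (simp add: EqP_def EqE_def EqS_def)
  next
    case (Until a b)
    have P: "EqP ch lb r1 r2 R (Until a b)" by (simp add: EqP_def)
    have E: "EqE ch lb r1 r2 R (Until a b)" unfolding EqE_def EqS_def
    proof (intro allI impI)
      fix k x y
      assume x: "x \<in> tnodes ch r1" and y: "y \<in> tnodes ch r2" and R: "R k (tyof ch r1 x) (tyof ch r2 y)"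
        and pc: "pc_s (Ex (Until a b))" and pf: "past_free_s (Ex (Until a b))" and s: "sz (Ex (Until a b)) \<le> k"
      then obtain k' where k: "k = Suc k'" "szp a \<le> k'" "szp b \<le> k'" by (cases k) auto
      have la: "loc a" and lb': "loc b" using loc_ctl[of a] loc_ctl[of b] pc pf by auto
      have IHa: "\<forall>u v. u \<in> tnodes ch r1 \<longrightarrow> v \<in> tnodes ch r2 \<longrightarrow> R k' (tyof ch r1 u) (tyof ch r2 v) \<longrightarrow>
          (lsem (mk ch lb r1) u a \<longleftrightarrow> lsem (mk ch lb r2) v a)"
        using Until pc pf k by (auto simp: EqP_def)
      have IHb: "\<forall>u v. u \<in> tnodes ch r1 \<longrightarrow> v \<in> tnodes ch r2 \<longrightarrow> R k' (tyof ch r1 u) (tyof ch r2 v) \<longrightarrow>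
          (lsem (mk ch lb r1) u b \<longleftrightarrow> lsem (mk ch lb r2) v b)"
        using Until pc pf k by (auto simp: EqP_def)
      have R2: "flipR R (Suc k') (tyof ch r2 y) (tyof ch r1 x)" using R k by simp
      have IHa': "\<forall>u v. u \<in> tnodes ch r2 \<longrightarrow> v \<in> tnodes ch r1 \<longrightarrow> flipR R k' (tyof ch r2 u) (tyof ch r1 v) \<longrightarrow>
          (lsem (mk ch lb r2) u a \<longleftrightarrow> lsem (mk ch lb r1) v a)" using IHa by auto
      have IHb': "\<forall>u v. u \<in> tnodes ch r2 \<longrightarrow> v \<in> tnodes ch r1 \<longrightarrow> flipR R k' (tyof ch r2 u) (tyof ch r1 v) \<longrightarrow>
          (lsem (mk ch lb r2) u b \<longleftrightarrow> lsem (mk ch lb r1) v b)" using IHb by auto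
      have "(\<exists>m f. npath (mk ch lb r1) x m f \<and> lsem (mk ch lb r1) (f m) b \<and> (\<forall>j<m. lsem (mk ch lb r1) (f j) a))
        \<longleftrightarrow> (\<exists>m f. npath (mk ch lb r2) y m f \<and> lsem (mk ch lb r2) (f m) b \<and> (\<forall>j<m. lsem (mk ch lb r2) (f j) a))"
      proof
        assume "\<exists>m f. npath (mk ch lb r1) x m f \<and> lsem (mk ch lb r1) (f m) b \<and> (\<forall>j<m. lsem (mk ch lb r1) (f j) a)"
        then show "\<exists>m f. npath (mk ch lb r2) y m f \<and> lsem (mk ch lb r2) (f m) b \<and> (\<forall>j<m. lsem (mk ch lb r2) (f j) a)"
          by (rule EU_transfer[OF U1 x y R[unfolded k] IHa IHb])
      next
        assume "\<exists>m f. npath (mk ch lb r2) y m f \<and> lsem (mk ch lb r2) (f m) b \<and> (\<forall>j<m. lsem (mk ch lb r2) (f j) a)"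
        then show "\<exists>m f. npath (mk ch lb r1) x m f \<and> lsem (mk ch lb r1) (f m) b \<and> (\<forall>j<m. lsem (mk ch lb r1) (f j) a)"
          by (rule EU_transfer[OF U2 y x R2 IHa' IHb'])
      qed
      then show "sem_s (mk ch lb r1) x (Ex (Until a b)) = sem_s (mk ch lb r2) y (Ex (Until a b))"
        using sem_EU[OF T1 _ la lb', of x] sem_EU[OF T2 _ la lb', of y] x y by simp
    qed
    show ?case using P E by simp
  next
    case (Release a b)
    have P: "EqP ch lb r1 r2 R (Release a b)" by (simp add: EqP_def)
    have E: "EqE ch lb r1 r2 R (Release a b)" unfolding EqE_def EqS_def
    proof (intro allI impI)
      fix k x y
      assume x: "x \<in> tnodes ch r1" and y: "y \<in> tnodes ch r2" and R: "R k (tyof ch r1 x) (tyof ch r2 y)"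
        and pc: "pc_s (Ex (Release a b))" and pf: "past_free_s (Ex (Release a b))" and s: "sz (Ex (Release a b)) \<le> k"
      then obtain k' where k: "k = Suc k'" "szp a \<le> k'" "szp b \<le> k'" by (cases k) auto
      have la: "loc a" and lb': "loc b" using loc_ctl[of a] loc_ctl[of b] pc pf by auto
      have IHa: "\<forall>u v. u \<in> tnodes ch r1 \<longrightarrow> v \<in> tnodes ch r2 \<longrightarrow> R k' (tyof ch r1 u) (tyof ch r2 v) \<longrightarrow>
          (lsem (mk ch lb r1) u a \<longleftrightarrow> lsem (mk ch lb r2) v a)"
        using Release pc pf k by (auto simp: EqP_def)
      have IHb: "\<forall>u v. u \<in> tnodes ch r1 \<longrightarrow> v \<in> tnodes ch r2 \<longrightarrow> R k' (tyof ch r1 u) (tyof ch r2 v) \<longrightarrow>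
          (lsem (mk ch lb r1) u b \<longleftrightarrow> lsem (mk ch lb r2) v b)"
        using Release pc pf k by (auto simp: EqP_def)
      have IHab: "\<forall>u v. u \<in> tnodes ch r1 \<longrightarrow> v \<in> tnodes ch r2 \<longrightarrow> R k' (tyof ch r1 u) (tyof ch r2 v) \<longrightarrow>
          (lsem (mk ch lb r1) u a \<and> lsem (mk ch lb r1) u b \<longleftrightarrow> lsem (mk ch lb r2) v a \<and> lsem (mk ch lb r2) v b)"
        using IHa IHb by blast
      have R2: "flipR R (Suc k') (tyof ch r2 y) (tyof ch r1 x)" using R k by simp
      have IHa': "\<forall>u v. u \<in> tnodes ch r2 \<longrightarrow> v \<in> tnodes ch r1 \<longrightarrow> flipR R k' (tyof ch r2 u) (tyof ch r1 v) \<longrightarrow>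
          (lsem (mk ch lb r2) u a \<longleftrightarrow> lsem (mk ch lb r1) v a)" using IHa by auto
      have IHb': "\<forall>u v. u \<in> tnodes ch r2 \<longrightarrow> v \<in> tnodes ch r1 \<longrightarrow> flipR R k' (tyof ch r2 u) (tyof ch r1 v) \<longrightarrow>
          (lsem (mk ch lb r2) u b \<longleftrightarrow> lsem (mk ch lb r1) v b)" using IHb by auto
      have IHab': "\<forall>u v. u \<in> tnodes ch r2 \<longrightarrow> v \<in> tnodes ch r1 \<longrightarrow> flipR R k' (tyof ch r2 u) (tyof ch r1 v) \<longrightarrow>
          (lsem (mk ch lb r2) u a \<and> lsem (mk ch lb r2) u b \<longleftrightarrow> lsem (mk ch lb r1) v a \<and> lsem (mk ch lb r1) v b)"
        using IHab by auto
      have A: "(\<exists>f. inpath (mk ch lb r1) x f \<and> (\<forall>j. lsem (mk ch lb r1) (f j) b))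
        \<longleftrightarrow> (\<exists>f. inpath (mk ch lb r2) y f \<and> (\<forall>j. lsem (mk ch lb r2) (f j) b))"
      proof
        assume "\<exists>f. inpath (mk ch lb r1) x f \<and> (\<forall>j. lsem (mk ch lb r1) (f j) b)"
        then show "\<exists>f. inpath (mk ch lb r2) y f \<and> (\<forall>j. lsem (mk ch lb r2) (f j) b)"
          by (rule EG_transfer[OF G1 x y R[unfolded k] IHb])
      next
        assume "\<exists>f. inpath (mk ch lb r2) y f \<and> (\<forall>j. lsem (mk ch lb r2) (f j) b)"
        then show "\<exists>f. inpath (mk ch lb r1) x f \<and> (\<forall>j. lsem (mk ch lb r1) (f j) b)"
          by (rule EG_transfer[OF G2 y x R2 IHb'])
      qed
      have B: "(\<exists>m f. npath (mk ch lb r1) x m f \<and> (lsem (mk ch lb r1) (f m) a \<and> lsem (mk ch lb r1) (f m) b) \<and> (\<forall>j<m. lsem (mk ch lb r1) (f j) b))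
        \<longleftrightarrow> (\<exists>m f. npath (mk ch lb r2) y m f \<and> (lsem (mk ch lb r2) (f m) a \<and> lsem (mk ch lb r2) (f m) b) \<and> (\<forall>j<m. lsem (mk ch lb r2) (f j) b))"
      proof
        assume "\<exists>m f. npath (mk ch lb r1) x m f \<and> (lsem (mk ch lb r1) (f m) a \<and> lsem (mk ch lb r1) (f m) b) \<and> (\<forall>j<m. lsem (mk ch lb r1) (f j) b)"
        then show "\<exists>m f. npath (mk ch lb r2) y m f \<and> (lsem (mk ch lb r2) (f m) a \<and> lsem (mk ch lb r2) (f m) b) \<and> (\<forall>j<m. lsem (mk ch lb r2) (f j) b)"
          by (rule EU_transfer[OF U1 x y R[unfolded k] IHb IHab])
      next
        assume "\<exists>m f. npath (mk ch lb r2) y m f \<and> (lsem (mk ch lb r2) (f m) a \<and> lsem (mk ch lb r2) (f m) b) \<and> (\<forall>j<m. lsem (mk ch lb r2) (f j) b)"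
        then show "\<exists>m f. npath (mk ch lb r1) x m f \<and> (lsem (mk ch lb r1) (f m) a \<and> lsem (mk ch lb r1) (f m) b) \<and> (\<forall>j<m. lsem (mk ch lb r1) (f j) b)"
          by (rule EU_transfer[OF U2 y x R2 IHb' IHab'])
      qed
      show "sem_s (mk ch lb r1) x (Ex (Release a b)) = sem_s (mk ch lb r2) y (Ex (Release a b))"
        using sem_ER[OF T1 _ la lb', of x] sem_ER[OF T2 _ la lb', of y] x y A B by simp
    qed
    show ?case using P E by simp
  }
qed


definition cons :: "('t \<Rightarrow> 't list) \<Rightarrow> ('t \<Rightarrow> 't) \<Rightarrow> ('t \<Rightarrow> nat) \<Rightarrow> ('t \<Rightarrow> bool) \<Rightarrow> 't \<Rightarrow> bool" where
  "cons ch par dep Inv r \<longleftrightarrow> Inv r \<and> dep r = 0 \<and>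
     (\<forall>s. Inv s \<longrightarrow> (\<forall>c\<in>set (ch s). Inv c \<and> par c = s \<and> dep c = Suc (dep s)))"

lemma cons_nodes:
  assumes C: "cons ch par dep Inv r" and w: "w \<in> tnodes ch r"
  shows "Inv (tyof ch r w) \<and> dep (tyof ch r w) = length w \<and> (w \<noteq> [] \<longrightarrow> par (tyof ch r w) = tyof ch r (butlast w))"
  using w
proof (induction w rule: rev_induct)
  case Nil then show ?case using C by (simp add: cons_def)
next
  case (snoc i u)
  then have u: "u \<in> tnodes ch r" "i < length (ch (tyof ch r u))" by (auto simp: snoc_tnodes)
  then have IH: "Inv (tyof ch r u)" "dep (tyof ch r u) = length u" using snoc by auto
  have ty: "tyof ch r (u @ [i]) = ch (tyof ch r u) ! i" using u by (simp add: tyof_snoc)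
  have "ch (tyof ch r u) ! i \<in> set (ch (tyof ch r u))" using u by simp
  then show ?case using C IH ty by (auto simp: cons_def)
qed

lemma cons_anc:
  assumes C: "cons ch par dep Inv r" and w: "w \<in> tnodes ch r" and n: "n \<le> length w"
  shows "take (length w - n) w \<in> tnodes ch r \<and> tyof ch r (take (length w - n) w) = (par ^^ n) (tyof ch r w)"
  using n
proof (induction n)
  case 0 then show ?case using w by simp
next
  case (Suc n)
  let ?u = "take (length w - n) w"
  have IH: "?u \<in> tnodes ch r" "tyof ch r ?u = (par ^^ n) (tyof ch r w)" using Suc by auto
  have ne: "?u \<noteq> []" using Suc.prems by (cases w) auto
  have bu: "butlast ?u = take (length w - Suc n) w" by (simp add: butlast_take)
  have "?u = butlast ?u @ [last ?u]" using ne by simp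
  then have m: "butlast ?u \<in> tnodes ch r" using IH(1) snoc_tnodes by metis
  have "par (tyof ch r ?u) = tyof ch r (butlast ?u)" using cons_nodes[OF C IH(1)] ne by blast
  then show ?case using m bu IH(2) by simp
qed

definition gY :: "('t \<Rightarrow> 't) \<Rightarrow> ('t \<Rightarrow> nat) \<Rightarrow> (nat \<Rightarrow> 't \<Rightarrow> 't \<Rightarrow> bool) \<Rightarrow> bool" where
  "gY par dep R \<longleftrightarrow> (\<forall>k s t. R (Suc k) s t \<longrightarrow> (dep s = 0 \<longleftrightarrow> dep t = 0) \<and> (dep s \<noteq> 0 \<longrightarrow> R k (par s) (par t)))"

definition gS :: "('t \<Rightarrow> 't) \<Rightarrow> ('t \<Rightarrow> nat) \<Rightarrow> (nat \<Rightarrow> 't \<Rightarrow> 't \<Rightarrow> bool) \<Rightarrow> bool" where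
  "gS par dep R \<longleftrightarrow> (\<forall>k s t n. R (Suc k) s t \<longrightarrow> n \<le> dep s \<longrightarrow>
     (\<exists>r\<le>dep t. R k ((par ^^ n) s) ((par ^^ r) t) \<and> (\<forall>h<r. \<exists>j<n. R k ((par ^^ j) s) ((par ^^ h) t))))"

lemma ES_transfer:
  assumes S: "gS par dep R" and C1: "cons ch par dep Inv r1" and C2: "cons ch par dep Inv r2"
    and x: "x \<in> tnodes ch r1" and y: "y \<in> tnodes ch r2"
    and R: "R (Suc k) (tyof ch r1 x) (tyof ch r2 y)"
    and IH1: "\<forall>u v. u \<in> tnodes ch r1 \<longrightarrow> v \<in> tnodes ch r2 \<longrightarrow> R k (tyof ch r1 u) (tyof ch r2 v) \<longrightarrow> (P1 u \<longleftrightarrow> Q1 v)"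
    and IH2: "\<forall>u v. u \<in> tnodes ch r1 \<longrightarrow> v \<in> tnodes ch r2 \<longrightarrow> R k (tyof ch r1 u) (tyof ch r2 v) \<longrightarrow> (P2 u \<longleftrightarrow> Q2 v)"
    and A: "\<exists>s\<le>length x. P2 (take (length x - s) x) \<and> (\<forall>j<s. P1 (take (length x - j) x))"
  shows "\<exists>s\<le>length y. Q2 (take (length y - s) y) \<and> (\<forall>j<s. Q1 (take (length y - j) y))"
proof -
  obtain n where n: "n \<le> length x" "P2 (take (length x - n) x)" "\<forall>j<n. P1 (take (length x - j) x)" using A by blast
  have dx: "dep (tyof ch r1 x) = length x" and dy: "dep (tyof ch r2 y) = length y"
    using cons_nodes[OF C1 x] cons_nodes[OF C2 y] by auto
  obtain r where r: "r \<le> length y" "R k ((par ^^ n) (tyof ch r1 x)) ((par ^^ r) (tyof ch r2 y))"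
    "\<forall>h<r. \<exists>j<n. R k ((par ^^ j) (tyof ch r1 x)) ((par ^^ h) (tyof ch r2 y))"
    using S R n(1) dx dy unfolding gS_def by metis
  have ax: "\<And>j. j \<le> length x \<Longrightarrow> take (length x - j) x \<in> tnodes ch r1 \<and> tyof ch r1 (take (length x - j) x) = (par ^^ j) (tyof ch r1 x)"
    using cons_anc[OF C1 x] by blast
  have ay: "\<And>j. j \<le> length y \<Longrightarrow> take (length y - j) y \<in> tnodes ch r2 \<and> tyof ch r2 (take (length y - j) y) = (par ^^ j) (tyof ch r2 y)"
    using cons_anc[OF C2 y] by blast
  have "Q2 (take (length y - r) y)" using IH2 ax[of n] ay[of r] n r by auto
  moreover have "\<forall>h<r. Q1 (take (length y - h) y)"
  proof (intro allI impI)
    fix h assume h: "h < r"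
    then obtain j where j: "j < n" "R k ((par ^^ j) (tyof ch r1 x)) ((par ^^ h) (tyof ch r2 y))" using r(3) by blast
    have a: "take (length x - j) x \<in> tnodes ch r1" "tyof ch r1 (take (length x - j) x) = (par ^^ j) (tyof ch r1 x)"
      using ax[of j] j n by auto
    have b: "take (length y - h) y \<in> tnodes ch r2" "tyof ch r2 (take (length y - h) y) = (par ^^ h) (tyof ch r2 y)"
      using ay[of h] h r by auto
    show "Q1 (take (length y - h) y)" using IH1[rule_format, OF a(1) b(1)] a(2) b(2) j n(3) by simp
  qed
  ultimately show ?thesis using r(1) by blast
qed

definition EqT :: "('t \<Rightarrow> 't list) \<Rightarrow> ('t \<Rightarrow> 'ap set) \<Rightarrow> 't \<Rightarrow> 't \<Rightarrow> (nat \<Rightarrow> 't \<Rightarrow> 't \<Rightarrow> bool) \<Rightarrow> 'ap sform \<Rightarrow> bool" where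
  "EqT ch lb r1 r2 R \<phi> \<longleftrightarrow> (\<forall>k x y. x \<in> tnodes ch r1 \<longrightarrow> y \<in> tnodes ch r2 \<longrightarrow> R k (tyof ch r1 x) (tyof ch r2 y) \<longrightarrow>
     pastctlpm \<phi> \<longrightarrow> sz \<phi> \<le> k \<longrightarrow> sem_s (mk ch lb r1) x \<phi> = sem_s (mk ch lb r2) y \<phi>)"

theorem past_game:
  assumes ne: "\<forall>s. ch s \<noteq> []" and L: "glab lb R" and X: "gX ch R"
    and U1: "gEU ch R" and U2: "gEU ch (flipR R)" and Y: "gY par dep R"
    and S1: "gS par dep R" and S2: "gS par dep (flipR R)"
    and C1: "cons ch par dep Inv r1" and C2: "cons ch par dep Inv r2"
  shows "EqT ch lb r1 r2 R \<phi>"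
proof (induction \<phi> rule: sform.induct[where ?P2.0 = "\<lambda>\<psi>. (\<forall>a. \<psi> = PSt a \<longrightarrow> EqT ch lb r1 r2 R a) \<and> EqT ch lb r1 r2 R (Ex \<psi>)"])
  have T1: "is_tree (mk ch lb r1)" by (rule is_tree_mk[OF ne])
  have T2: "is_tree (mk ch lb r2)" by (rule is_tree_mk[OF ne])
  {
    case (Ap p)
    show ?case using L by (auto simp: EqT_def glab_def)
  next
    case (SNeg \<phi>)
    then show ?case by (auto simp: EqT_def)
  next
    case (SOr \<phi>1 \<phi>2)
    show ?case unfolding EqT_def
    proof (intro allI impI)
      fix k x y
      assume x: "x \<in> tnodes ch r1" and y: "y \<in> tnodes ch r2" and R: "R k (tyof ch r1 x) (tyof ch r2 y)"
        and pc: "pastctlpm (SOr \<phi>1 \<phi>2)" and s: "sz (SOr \<phi>1 \<phi>2) \<le> k"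
      have "sem_s (mk ch lb r1) x \<phi>1 = sem_s (mk ch lb r2) y \<phi>1"
        using SOr(1)[unfolded EqT_def, rule_format, OF x y R] pc s by simp
      moreover have "sem_s (mk ch lb r1) x \<phi>2 = sem_s (mk ch lb r2) y \<phi>2"
        using SOr(2)[unfolded EqT_def, rule_format, OF x y R] pc s by simp
      ultimately show "sem_s (mk ch lb r1) x (SOr \<phi>1 \<phi>2) = sem_s (mk ch lb r2) y (SOr \<phi>1 \<phi>2)" by simp
    qed
  next
    case (Dn n \<phi>)
    show ?case unfolding EqT_def
    proof (intro allI impI)
      fix k x y
      assume x: "x \<in> tnodes ch r1" and y: "y \<in> tnodes ch r2" and R: "R k (tyof ch r1 x) (tyof ch r2 y)"
        and pc: "pastctlpm (Dn n \<phi>)" and s: "sz (Dn n \<phi>) \<le> k"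
      then obtain k' where k: "k = Suc k'" "sz \<phi> \<le> k'" by (cases k) auto
      have "card {c\<in>children (tnodes ch r1) x. sem_s (mk ch lb r1) c \<phi>} = card {c\<in>children (tnodes ch r2) y. sem_s (mk ch lb r2) c \<phi>}"
        by (rule EX_transfer(2)[OF X x y R[unfolded k]]) (use Dn pc k in \<open>auto simp: EqT_def\<close>)
      then show "sem_s (mk ch lb r1) x (Dn n \<phi>) = sem_s (mk ch lb r2) y (Dn n \<phi>)" by simp
    qed
  next
    case (Ex \<psi>)
    then show ?case by simp
  next
    case (PSt \<phi>)
    then show ?case by (simp add: EqT_def)
  next
    case (PNeg \<psi>)
    show ?case by (simp add: EqT_def)
  next
    case (POr \<psi>1 \<psi>2)
    show ?case by (simp add: EqT_def)
  next
    case (Release \<psi>1 \<psi>2)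
    show ?case by (simp add: EqT_def)
  next
    case (Nx \<psi>)
    have E: "EqT ch lb r1 r2 R (Ex (Nx \<psi>))" unfolding EqT_def
    proof (intro allI impI)
      fix k x y
      assume x: "x \<in> tnodes ch r1" and y: "y \<in> tnodes ch r2" and R: "R k (tyof ch r1 x) (tyof ch r2 y)"
        and pc: "pastctlpm (Ex (Nx \<psi>))" and s: "sz (Ex (Nx \<psi>)) \<le> k"
      obtain a where a: "\<psi> = PSt a" "pastctlpm a" using pc by (cases \<psi>) auto
      obtain k' where k: "k = Suc k'" "sz a \<le> k'" using s a by (cases k) auto
      have IH: "EqT ch lb r1 r2 R a" using Nx a by simp
      have "(\<exists>c\<in>children (tnodes ch r1) x. sem_s (mk ch lb r1) c a) \<longleftrightarrow> (\<exists>c\<in>children (tnodes ch r2) y. sem_s (mk ch lb r2) c a)"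
        by (rule EX_transfer(1)[OF X x y R[unfolded k]]) (use IH a k in \<open>auto simp: EqT_def\<close>)
      then show "sem_s (mk ch lb r1) x (Ex (Nx \<psi>)) = sem_s (mk ch lb r2) y (Ex (Nx \<psi>))"
        using sem_EX[OF T1 _ loc_PSt[of a], of x] sem_EX[OF T2 _ loc_PSt[of a], of y] x y a by simp
    qed
    show ?case using E by simp
  next
    case (Yx \<psi>)
    have E: "EqT ch lb r1 r2 R (Ex (Yx \<psi>))" unfolding EqT_def
    proof (intro allI impI)
      fix k x y
      assume x: "x \<in> tnodes ch r1" and y: "y \<in> tnodes ch r2" and R: "R k (tyof ch r1 x) (tyof ch r2 y)"
        and pc: "pastctlpm (Ex (Yx \<psi>))" and s: "sz (Ex (Yx \<psi>)) \<le> k"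
      obtain a where a: "\<psi> = PSt a" "pastctlpm a" using pc by (cases \<psi>) auto
      obtain k' where k: "k = Suc k'" "sz a \<le> k'" using s a by (cases k) auto
      have IH: "EqT ch lb r1 r2 R a" using Yx a by simp
      have cx: "dep (tyof ch r1 x) = length x" "x \<noteq> [] \<longrightarrow> par (tyof ch r1 x) = tyof ch r1 (butlast x)"
        using cons_nodes[OF C1 x] by auto
      have cy: "dep (tyof ch r2 y) = length y" "y \<noteq> [] \<longrightarrow> par (tyof ch r2 y) = tyof ch r2 (butlast y)"
        using cons_nodes[OF C2 y] by auto
      have YY: "(length x = 0 \<longleftrightarrow> length y = 0)" "length x \<noteq> 0 \<longrightarrow> R k' (par (tyof ch r1 x)) (par (tyof ch r2 y))"
        using Y R k cx cy unfolding gY_def by metis+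
      have "(x \<noteq> [] \<and> sem_s (mk ch lb r1) (butlast x) a) \<longleftrightarrow> (y \<noteq> [] \<and> sem_s (mk ch lb r2) (butlast y) a)"
      proof (cases "x = []")
        case True then show ?thesis using YY by simp
      next
        case False
        then have yn: "y \<noteq> []" using YY by simp
        have bx: "butlast x \<in> tnodes ch r1" using x False snoc_tnodes by (metis append_butlast_last_id)
        have by': "butlast y \<in> tnodes ch r2" using y yn snoc_tnodes by (metis append_butlast_last_id)
        have "R k' (tyof ch r1 (butlast x)) (tyof ch r2 (butlast y))" using YY False yn cx cy by simp
        then show ?thesis using IH[unfolded EqT_def, rule_format, OF bx by'] a k False yn by simp
      qed
      then show "sem_s (mk ch lb r1) x (Ex (Yx \<psi>)) = sem_s (mk ch lb r2) y (Ex (Yx \<psi>))"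
        using sem_EY[OF T1, of x a] sem_EY[OF T2, of y a] x y a by simp
    qed
    show ?case using E by simp
  next
    case (Until \<psi>1 \<psi>2)
    have E: "EqT ch lb r1 r2 R (Ex (Until \<psi>1 \<psi>2))" unfolding EqT_def
    proof (intro allI impI)
      fix k x y
      assume x: "x \<in> tnodes ch r1" and y: "y \<in> tnodes ch r2" and R: "R k (tyof ch r1 x) (tyof ch r2 y)"
        and pc: "pastctlpm (Ex (Until \<psi>1 \<psi>2))" and s: "sz (Ex (Until \<psi>1 \<psi>2)) \<le> k"
      obtain a b where a: "\<psi>1 = PSt a" "\<psi>2 = PSt b" "pastctlpm a" "pastctlpm b"
        using pc by (cases \<psi>1; cases \<psi>2) auto
      obtain k' where k: "k = Suc k'" "sz a \<le> k'" "sz b \<le> k'" using s a by (cases k) auto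
      have IHa: "\<forall>u v. u \<in> tnodes ch r1 \<longrightarrow> v \<in> tnodes ch r2 \<longrightarrow> R k' (tyof ch r1 u) (tyof ch r2 v) \<longrightarrow>
          (sem_s (mk ch lb r1) u a \<longleftrightarrow> sem_s (mk ch lb r2) v a)"
        using Until a k by (auto simp: EqT_def)
      have IHb: "\<forall>u v. u \<in> tnodes ch r1 \<longrightarrow> v \<in> tnodes ch r2 \<longrightarrow> R k' (tyof ch r1 u) (tyof ch r2 v) \<longrightarrow>
          (sem_s (mk ch lb r1) u b \<longleftrightarrow> sem_s (mk ch lb r2) v b)"
        using Until a k by (auto simp: EqT_def)
      have R2: "flipR R (Suc k') (tyof ch r2 y) (tyof ch r1 x)" using R k by simp
      have IHa': "\<forall>u v. u \<in> tnodes ch r2 \<longrightarrow> v \<in> tnodes ch r1 \<longrightarrow> flipR R k' (tyof ch r2 u) (tyof ch r1 v) \<longrightarrow>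
          (sem_s (mk ch lb r2) u a \<longleftrightarrow> sem_s (mk ch lb r1) v a)" using IHa by auto
      have IHb': "\<forall>u v. u \<in> tnodes ch r2 \<longrightarrow> v \<in> tnodes ch r1 \<longrightarrow> flipR R k' (tyof ch r2 u) (tyof ch r1 v) \<longrightarrow>
          (sem_s (mk ch lb r2) u b \<longleftrightarrow> sem_s (mk ch lb r1) v b)" using IHb by auto
      have "(\<exists>m f. npath (mk ch lb r1) x m f \<and> sem_s (mk ch lb r1) (f m) b \<and> (\<forall>j<m. sem_s (mk ch lb r1) (f j) a))
        \<longleftrightarrow> (\<exists>m f. npath (mk ch lb r2) y m f \<and> sem_s (mk ch lb r2) (f m) b \<and> (\<forall>j<m. sem_s (mk ch lb r2) (f j) a))"
      proof
        assume "\<exists>m f. npath (mk ch lb r1) x m f \<and> sem_s (mk ch lb r1) (f m) b \<and> (\<forall>j<m. sem_s (mk ch lb r1) (f j) a)"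
        then show "\<exists>m f. npath (mk ch lb r2) y m f \<and> sem_s (mk ch lb r2) (f m) b \<and> (\<forall>j<m. sem_s (mk ch lb r2) (f j) a)"
          by (rule EU_transfer[OF U1 x y R[unfolded k] IHa IHb])
      next
        assume "\<exists>m f. npath (mk ch lb r2) y m f \<and> sem_s (mk ch lb r2) (f m) b \<and> (\<forall>j<m. sem_s (mk ch lb r2) (f j) a)"
        then show "\<exists>m f. npath (mk ch lb r1) x m f \<and> sem_s (mk ch lb r1) (f m) b \<and> (\<forall>j<m. sem_s (mk ch lb r1) (f j) a)"
          by (rule EU_transfer[OF U2 y x R2 IHa' IHb'])
      qed
      then show "sem_s (mk ch lb r1) x (Ex (Until \<psi>1 \<psi>2)) = sem_s (mk ch lb r2) y (Ex (Until \<psi>1 \<psi>2))"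
        using sem_EU[OF T1 _ loc_PSt[of a] loc_PSt[of b], of x] sem_EU[OF T2 _ loc_PSt[of a] loc_PSt[of b], of y] x y a
        by simp
    qed
    show ?case using E by simp
  next
    case (Since \<psi>1 \<psi>2)
    have E: "EqT ch lb r1 r2 R (Ex (Since \<psi>1 \<psi>2))" unfolding EqT_def
    proof (intro allI impI)
      fix k x y
      assume x: "x \<in> tnodes ch r1" and y: "y \<in> tnodes ch r2" and R: "R k (tyof ch r1 x) (tyof ch r2 y)"
        and pc: "pastctlpm (Ex (Since \<psi>1 \<psi>2))" and s: "sz (Ex (Since \<psi>1 \<psi>2)) \<le> k"
      obtain a b where a: "\<psi>1 = PSt a" "\<psi>2 = PSt b" "pastctlpm a" "pastctlpm b"
        using pc by (cases \<psi>1; cases \<psi>2) auto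
      obtain k' where k: "k = Suc k'" "sz a \<le> k'" "sz b \<le> k'" using s a by (cases k) auto
      have IHa: "\<forall>u v. u \<in> tnodes ch r1 \<longrightarrow> v \<in> tnodes ch r2 \<longrightarrow> R k' (tyof ch r1 u) (tyof ch r2 v) \<longrightarrow>
          (sem_s (mk ch lb r1) u a \<longleftrightarrow> sem_s (mk ch lb r2) v a)"
        using Since a k by (auto simp: EqT_def)
      have IHb: "\<forall>u v. u \<in> tnodes ch r1 \<longrightarrow> v \<in> tnodes ch r2 \<longrightarrow> R k' (tyof ch r1 u) (tyof ch r2 v) \<longrightarrow>
          (sem_s (mk ch lb r1) u b \<longleftrightarrow> sem_s (mk ch lb r2) v b)"
        using Since a k by (auto simp: EqT_def)
      have R2: "flipR R (Suc k') (tyof ch r2 y) (tyof ch r1 x)" using R k by simp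
      have IHa': "\<forall>u v. u \<in> tnodes ch r2 \<longrightarrow> v \<in> tnodes ch r1 \<longrightarrow> flipR R k' (tyof ch r2 u) (tyof ch r1 v) \<longrightarrow>
          (sem_s (mk ch lb r2) u a \<longleftrightarrow> sem_s (mk ch lb r1) v a)" using IHa by auto
      have IHb': "\<forall>u v. u \<in> tnodes ch r2 \<longrightarrow> v \<in> tnodes ch r1 \<longrightarrow> flipR R k' (tyof ch r2 u) (tyof ch r1 v) \<longrightarrow>
          (sem_s (mk ch lb r2) u b \<longleftrightarrow> sem_s (mk ch lb r1) v b)" using IHb by auto
      have "(\<exists>s\<le>length x. sem_s (mk ch lb r1) (take (length x - s) x) b \<and> (\<forall>j<s. sem_s (mk ch lb r1) (take (length x - j) x) a))
        \<longleftrightarrow> (\<exists>s\<le>length y. sem_s (mk ch lb r2) (take (length y - s) y) b \<and> (\<forall>j<s. sem_s (mk ch lb r2) (take (length y - j) y) a))"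
      proof
        assume "\<exists>s\<le>length x. sem_s (mk ch lb r1) (take (length x - s) x) b \<and> (\<forall>j<s. sem_s (mk ch lb r1) (take (length x - j) x) a)"
        then show "\<exists>s\<le>length y. sem_s (mk ch lb r2) (take (length y - s) y) b \<and> (\<forall>j<s. sem_s (mk ch lb r2) (take (length y - j) y) a)"
          by (rule ES_transfer[OF S1 C1 C2 x y R[unfolded k] IHa IHb])
      next
        assume "\<exists>s\<le>length y. sem_s (mk ch lb r2) (take (length y - s) y) b \<and> (\<forall>j<s. sem_s (mk ch lb r2) (take (length y - j) y) a)"
        then show "\<exists>s\<le>length x. sem_s (mk ch lb r1) (take (length x - s) x) b \<and> (\<forall>j<s. sem_s (mk ch lb r1) (take (length x - j) x) a)"
          by (rule ES_transfer[OF S2 C2 C1 y x R2 IHa' IHb'])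
      qed
      then show "sem_s (mk ch lb r1) x (Ex (Since \<psi>1 \<psi>2)) = sem_s (mk ch lb r2) y (Ex (Since \<psi>1 \<psi>2))"
        using sem_ES[OF T1, of x a b] sem_ES[OF T2, of y a b] x y a by simp
    qed
    show ?case using E by simp
  }
qed


datatype bt = BN bool nat | BS bool nat | BQ bool | BZ bool

fun bch :: "bt \<Rightarrow> bt list" where
  "bch (BN l a) = [BN l a, (if a \<le> 1 then BQ (\<not> l) else BN (\<not> l) (a - 1))]"
| "bch (BS l i) = [BS (\<not> l) (Suc i), BN l i]"
| "bch (BQ l) = [BZ l, BZ l, BZ l]"
| "bch (BZ l) = [BZ l]"

fun bl :: "bt \<Rightarrow> bool" where
  "bl (BN l _) = l" | "bl (BS l _) = l" | "bl (BQ l) = l" | "bl (BZ l) = l"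

definition blb :: "'ap \<Rightarrow> bt \<Rightarrow> 'ap set" where
  "blb p \<sigma> = (if bl \<sigma> then {p} else {})"

fun bok :: "nat \<Rightarrow> bt \<Rightarrow> bool" where
  "bok c (BN l a) = (1 \<le> a \<and> l = even (a + c))"
| "bok c (BS l i) = (1 \<le> i \<and> l = even (i + c))"
| "bok c (BQ l) = (l = even c)"
| "bok c (BZ l) = (l = even c)"

fun bcls :: "nat \<Rightarrow> bt \<Rightarrow> nat \<times> nat \<times> bool" where
  "bcls g (BN l a) = (0, min a g, l)"
| "bcls g (BS l i) = (if g \<le> i then (0, g, l) else (1, i, l))"
| "bcls g (BQ l) = (2, 0, l)"
| "bcls g (BZ l) = (3, 0, l)"

fun isBS :: "bt \<Rightarrow> bool" where
  "isBS (BS _ _) = True" | "isBS _ = False"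

fun rk :: "bt \<Rightarrow> nat" where
  "rk (BN _ a) = Suc a" | "rk (BS _ i) = Suc (Suc i)" | "rk (BQ _) = 1" | "rk (BZ _) = 0"

fun bval :: "bt \<Rightarrow> nat" where
  "bval (BN _ a) = a" | "bval (BS _ i) = i" | "bval _ = 0"

fun bbig :: "nat \<Rightarrow> bt \<Rightarrow> bool" where
  "bbig g (BN _ a) = (g \<le> a)" | "bbig g (BS _ i) = (g \<le> i)" | "bbig g _ = False"

definition bR :: "nat \<Rightarrow> nat \<Rightarrow> bt \<Rightarrow> bt \<Rightarrow> bool" where
  "bR c k \<sigma> \<tau> \<longleftrightarrow> bok c \<sigma> \<and> bok c \<tau> \<and> bcls (Suc k) \<sigma> = bcls (Suc k) \<tau>"

definition dsc :: "bt \<Rightarrow> bt" where "dsc \<sigma> = last (bch \<sigma>)"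

lemma bch_ne: "\<forall>s. bch s \<noteq> []"
  by (intro allI, case_tac s) auto

lemma bok_child: "bok c \<sigma> \<Longrightarrow> \<tau> \<in> set (bch \<sigma>) \<Longrightarrow> bok c \<tau>"
  by (cases \<sigma>) (auto split: if_splits)

lemma tp_ok: "bok c \<sigma> \<Longrightarrow> tp bch \<sigma> m f \<Longrightarrow> j \<le> m \<Longrightarrow> bok c (f j)"
  by (induction j) (auto simp: tp_def intro: bok_child)

lemma itp_ok: "bok c \<sigma> \<Longrightarrow> itp bch \<sigma> f \<Longrightarrow> bok c (f j)"
  by (induction j) (auto simp: itp_def intro: bok_child)

lemma cls_exact: "bok c \<sigma> \<Longrightarrow> bok c \<tau> \<Longrightarrow> bcls g \<sigma> = bcls g \<tau> \<Longrightarrow> \<not> bbig g \<sigma> \<Longrightarrow> \<sigma> = \<tau>"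
  by (cases \<sigma>; cases \<tau>) (auto split: if_splits simp: min_def)

lemma cls_big: "bcls g \<sigma> = bcls g \<tau> \<Longrightarrow> bbig g \<sigma> \<Longrightarrow> bbig g \<tau> \<and> bl \<sigma> = bl \<tau>"
  by (cases \<sigma>; cases \<tau>) (auto split: if_splits simp: min_def)

lemma big_cls: "bbig g \<sigma> \<Longrightarrow> bcls g \<sigma> = (0, g, bl \<sigma>)"
  by (cases \<sigma>) auto

lemma big_mono: "bbig (Suc g) \<sigma> \<Longrightarrow> bbig g \<sigma>"
  by (cases \<sigma>) auto

lemma same_rank: "bok c \<sigma> \<Longrightarrow> bok c \<tau> \<Longrightarrow> \<not> isBS \<sigma> \<Longrightarrow> \<not> isBS \<tau> \<Longrightarrow> rk \<sigma> = rk \<tau> \<Longrightarrow> \<sigma> = \<tau>"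
  by (cases \<sigma>; cases \<tau>) auto

lemma child_rank: "bok c \<sigma> \<Longrightarrow> \<not> isBS \<sigma> \<Longrightarrow> \<tau> \<in> set (bch \<sigma>) \<Longrightarrow> \<not> isBS \<tau> \<and> (rk \<tau> = rk \<sigma> \<or> Suc (rk \<tau>) = rk \<sigma>)"
  by (cases \<sigma>) (auto split: if_splits)

lemma BS_child: "\<tau> \<in> set (bch \<sigma>) \<Longrightarrow> isBS \<tau> \<Longrightarrow> isBS \<sigma> \<and> bval \<tau> = Suc (bval \<sigma>)"
  by (cases \<sigma>) (auto split: if_splits)

lemma BS_path: "tp bch \<sigma> m f \<Longrightarrow> j \<le> m \<Longrightarrow> isBS (f j) \<Longrightarrow> isBS \<sigma> \<and> bval \<sigma> \<le> bval (f j)"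
proof (induction j)
  case 0 then show ?case by (simp add: tp_def)
next
  case (Suc j)
  then have "f (Suc j) \<in> set (bch (f j))" by (simp add: tp_def)
  then have "isBS (f j) \<and> bval (f (Suc j)) = Suc (bval (f j))" using BS_child Suc.prems by blast
  then show ?case using Suc by auto
qed

lemma dsc_mem: "dsc \<sigma> \<in> set (bch \<sigma>)"
  by (cases \<sigma>) (auto simp: dsc_def)

lemma dsc_rank: "bok c \<sigma> \<Longrightarrow> 0 < rk \<sigma> \<Longrightarrow> rk (dsc \<sigma>) = rk \<sigma> - 1 \<and> \<not> isBS (dsc \<sigma>)"
  by (cases \<sigma>) (auto simp: dsc_def)

lemma dsc_iter: "bok c \<sigma> \<Longrightarrow> j \<le> rk \<sigma> \<Longrightarrow>
   rk ((dsc ^^ j) \<sigma>) = rk \<sigma> - j \<and> bok c ((dsc ^^ j) \<sigma>) \<and> (0 < j \<longrightarrow> \<not> isBS ((dsc ^^ j) \<sigma>))"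
proof (induction j)
  case 0 then show ?case by simp
next
  case (Suc j)
  then have IH: "rk ((dsc ^^ j) \<sigma>) = rk \<sigma> - j" "bok c ((dsc ^^ j) \<sigma>)" by auto
  have "0 < rk ((dsc ^^ j) \<sigma>)" using IH Suc.prems by simp
  then have "rk (dsc ((dsc ^^ j) \<sigma>)) = rk ((dsc ^^ j) \<sigma>) - 1 \<and> \<not> isBS (dsc ((dsc ^^ j) \<sigma>))"
    using dsc_rank IH(2) by blast
  moreover have "bok c (dsc ((dsc ^^ j) \<sigma>))" using bok_child[OF IH(2) dsc_mem] .
  ultimately show ?case using IH by simp
qed

lemma dsc_tp: "tp bch \<sigma> m (\<lambda>j. (dsc ^^ j) \<sigma>)"
  by (simp add: tp_def dsc_mem)

lemma IVT:
  assumes "tp bch \<sigma> m f" "bok c \<sigma>" "\<forall>j\<le>m. isBS (f j) \<longrightarrow> V \<le> Suc (bval (f j))"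
    "\<not> isBS (f m)" "rk (f m) < \<rho>" "\<rho> \<le> V" "\<not> isBS \<sigma> \<longrightarrow> \<rho> \<le> rk \<sigma>"
  shows "\<exists>i<m. \<not> isBS (f i) \<and> rk (f i) = \<rho>"
  using assms
proof (induction m)
  case 0 then show ?case by (simp add: tp_def)
next
  case (Suc m)
  have tpm: "tp bch \<sigma> m f" using Suc.prems(1) by (simp add: tp_def)
  have ch: "f (Suc m) \<in> set (bch (f m))" using Suc.prems(1) by (simp add: tp_def)
  have okm: "bok c (f m)" using tp_ok[OF Suc.prems(2) tpm] by simp
  show ?case
  proof (cases "isBS (f m)")
    case True
    then obtain l i where fm: "f m = BS l i" by (cases "f m") auto
    then have "f (Suc m) = BN l i" using ch Suc.prems(4) by auto
    moreover have "V \<le> Suc i" using Suc.prems(3) fm by (metis bval.simps(2) isBS.simps(1) le_SucI order_refl)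
    ultimately show ?thesis using Suc.prems(5,6) by simp
  next
    case False
    have cr: "rk (f (Suc m)) = rk (f m) \<or> Suc (rk (f (Suc m))) = rk (f m)" using child_rank[OF okm False ch] by blast
    show ?thesis
    proof (cases "rk (f m) = \<rho>")
      case True then show ?thesis using False by auto
    next
      case ne: False
      show ?thesis
      proof (cases "rk (f m) < \<rho>")
        case True
        have "\<exists>i<m. \<not> isBS (f i) \<and> rk (f i) = \<rho>"
          using Suc.IH[OF tpm Suc.prems(2) _ False True Suc.prems(6,7)] Suc.prems(3) by simp
        then show ?thesis using less_SucI by blast
      next
        case False
        then show ?thesis using cr ne Suc.prems(5) by linarith
      qed
    qed
  qed
qed


lemma big_par: "bok c x \<Longrightarrow> bok c y \<Longrightarrow> \<not> isBS x \<Longrightarrow> \<not> isBS y \<Longrightarrow> Suc (Suc g) \<le> rk x \<Longrightarrow> Suc (Suc g) \<le> rk y \<Longrightarrow>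
   even (rk x) = even (rk y) \<Longrightarrow> bcls (Suc g) x = bcls (Suc g) y"
  by (cases x; cases y) (auto simp: min_def)

lemma bR_refl: "bok c \<sigma> \<Longrightarrow> bR c k \<sigma> \<sigma>"
  by (simp add: bR_def)

lemma bEU: "gEU bch (bR c)"
  unfolding gEU_def
proof (intro allI impI)
  fix k \<sigma> \<tau> m f
  assume R: "bR c (Suc k) \<sigma> \<tau>" and P: "tp bch \<sigma> m f"
  have ok\<sigma>: "bok c \<sigma>" and ok\<tau>: "bok c \<tau>" and cl: "bcls (Suc (Suc k)) \<sigma> = bcls (Suc (Suc k)) \<tau>"
    using R by (auto simp: bR_def)
  have okf: "\<And>j. j \<le> m \<Longrightarrow> bok c (f j)" using tp_ok[OF ok\<sigma> P] by blast
  have f0: "f 0 = \<sigma>" using P by (simp add: tp_def)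
  show "\<exists>l h. tp bch \<tau> l h \<and> bR c k (f m) (h l) \<and> (\<forall>j<l. \<exists>i<m. bR c k (f i) (h j))"
  proof (cases "bbig (Suc (Suc k)) \<sigma>")
    case False
    then have "\<sigma> = \<tau>" using cls_exact[OF ok\<sigma> ok\<tau> cl] by blast
    then show ?thesis using P okf bR_refl by (intro exI[of _ m] exI[of _ f]) auto
  next
    case big\<sigma>: True
    have big\<tau>: "bbig (Suc (Suc k)) \<tau>" and lab: "bl \<sigma> = bl \<tau>" using cls_big[OF cl big\<sigma>] by auto
    have c\<sigma>: "bcls (Suc k) \<sigma> = (0, Suc k, bl \<sigma>)" using big_cls big_mono big\<sigma> by blast
    have c\<tau>: "bcls (Suc k) \<tau> = (0, Suc k, bl \<tau>)" using big_cls big_mono big\<tau> by blast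
    have R\<sigma>\<tau>: "bR c k \<sigma> \<tau>" using ok\<sigma> ok\<tau> c\<sigma> c\<tau> lab by (simp add: bR_def)
    show ?thesis
    proof (cases "bbig (Suc k) (f m)")
      case bigm: True
      have cm: "bcls (Suc k) (f m) = (0, Suc k, bl (f m))" using big_cls bigm by blast
      show ?thesis
      proof (cases "bl (f m) = bl \<tau>")
        case True
        have "bR c k (f m) \<tau>" using okf[of m] ok\<tau> cm c\<tau> True by (simp add: bR_def)
        then show ?thesis by (intro exI[of _ 0] exI[of _ "\<lambda>_. \<tau>"]) (simp add: tp_def)
      next
        case False
        define opp where "opp = (case \<tau> of BN l a \<Rightarrow> BN (\<not> l) (a - 1) | BS l i \<Rightarrow> BS (\<not> l) (Suc i) | _ \<Rightarrow> \<tau>)"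
        have O: "opp \<in> set (bch \<tau>) \<and> bok c opp \<and> bbig (Suc k) opp \<and> bl opp = (\<not> bl \<tau>)"
          using big\<tau> ok\<tau> by (cases \<tau>) (auto simp: opp_def)
        have m0: "m \<noteq> 0" using False f0 lab by (cases m) auto
        have copp: "bcls (Suc k) opp = (0, Suc k, bl opp)" using big_cls O by blast
        have okm: "bok c (f m)" using okf by simp
        have "bR c k (f m) opp" unfolding bR_def using okm O cm copp False by auto
        moreover have "tp bch \<tau> 1 (\<lambda>j::nat. if j = 0 then \<tau> else opp)" using O by (simp add: tp_def)
        moreover have ex: "\<exists>i<m. bR c k (f i) \<tau>" using m0 f0 R\<sigma>\<tau> by (intro exI[of _ 0]) auto
        ultimately show ?thesis
          by (intro exI[of _ 1] exI[of _ "\<lambda>j::nat. if j = 0 then \<tau> else opp"]) (simp add: less_Suc_eq)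
      qed
    next
      case small: False
      have nbs: "\<not> isBS (f m)"
      proof
        assume b: "isBS (f m)"
        then have "bval \<sigma> \<le> bval (f m)" using BS_path[OF P order_refl] by blast
        moreover have "Suc (Suc k) \<le> bval \<sigma>" using big\<sigma> by (cases \<sigma>) auto
        ultimately show False using small b by (cases "f m") auto
      qed
      have rm: "rk (f m) \<le> Suc k" using nbs small by (cases "f m") auto
      have r\<tau>: "Suc (Suc (Suc k)) \<le> rk \<tau>" using big\<tau> by (cases \<tau>) auto
      have m0: "m \<noteq> 0" using small big\<sigma> f0 big_mono by (cases m) auto
      define V where "V = Suc (Suc (Suc k))"
      have BSc: "\<forall>j\<le>m. isBS (f j) \<longrightarrow> V \<le> Suc (bval (f j))"
      proof (intro allI impI)
        fix j assume j: "j \<le> m" "isBS (f j)"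
        then have "bval \<sigma> \<le> bval (f j)" using BS_path[OF P] by blast
        moreover have "Suc (Suc k) \<le> bval \<sigma>" using big\<sigma> by (cases \<sigma>) auto
        ultimately show "V \<le> Suc (bval (f j))" by (simp add: V_def)
      qed
      have s\<sigma>: "\<And>\<rho>. \<rho> \<le> V \<Longrightarrow> \<not> isBS \<sigma> \<longrightarrow> \<rho> \<le> rk \<sigma>"
        using big\<sigma> by (cases \<sigma>) (auto simp: V_def)
      define l where "l = rk \<tau> - rk (f m)"
      define h where "h j = (dsc ^^ j) \<tau>" for j
      have tph: "tp bch \<tau> l h" unfolding h_def by (rule dsc_tp)
      have l0: "0 < l" using rm r\<tau> by (simp add: l_def)
      have hl: "h l = f m"
      proof -
        have "rk (h l) = rk (f m) \<and> bok c (h l) \<and> \<not> isBS (h l)"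
          using dsc_iter[OF ok\<tau>, of l] l0 rm r\<tau> by (simp add: h_def l_def)
        then show ?thesis using same_rank okf[of m] nbs by blast
      qed
      have inter: "\<forall>j<l. \<exists>i<m. bR c k (f i) (h j)"
      proof (intro allI impI)
        fix j assume jl: "j < l"
        show "\<exists>i<m. bR c k (f i) (h j)"
        proof (cases "j = 0 \<and> isBS \<tau>")
          case True
          then show ?thesis using m0 f0 R\<sigma>\<tau> by (auto simp: h_def)
        next
          case False
          have D: "rk (h j) = rk \<tau> - j" "bok c (h j)" "0 < j \<longrightarrow> \<not> isBS (h j)"
            using dsc_iter[OF ok\<tau>, of j] jl by (auto simp: h_def l_def)
          have nb: "\<not> isBS (h j)" using False D(3) by (cases "j = 0") (auto simp: h_def)
          have gt: "rk (f m) < rk (h j)" using D(1) jl by (simp add: l_def)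
          show ?thesis
          proof (cases "rk (h j) \<le> V")
            case True
            obtain i where i: "i < m" "\<not> isBS (f i)" "rk (f i) = rk (h j)"
              using IVT[OF P ok\<sigma> BSc nbs gt True s\<sigma>[OF True]] by blast
            have "f i = h j" by (rule same_rank[of c]) (use okf[of i] i D(2) nb in auto)
            moreover have "bok c (f i)" using okf[of i] i(1) by simp
            ultimately have "bR c k (f i) (h j)" using bR_refl by metis
            then show ?thesis using i(1) by blast
          next
            case False
            define \<rho> where "\<rho> = (if even (rk (h j) + k) then Suc (Suc k) else Suc (Suc (Suc k)))"
            have \<rho>V: "\<rho> \<le> V" and \<rho>m: "rk (f m) < \<rho>" using rm by (auto simp: \<rho>_def V_def)
            obtain i where i: "i < m" "\<not> isBS (f i)" "rk (f i) = \<rho>"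
              using IVT[OF P ok\<sigma> BSc nbs \<rho>m \<rho>V s\<sigma>[OF \<rho>V]] by blast
            have oki: "bok c (f i)" using okf[of i] i(1) by simp
            have p1: "Suc (Suc k) \<le> rk (f i)" using i(3) by (simp add: \<rho>_def)
            have p2: "Suc (Suc k) \<le> rk (h j)" using False by (simp add: V_def)
            have p3: "even (rk (f i)) = even (rk (h j))" using i(3) by (auto simp: \<rho>_def)
            have "bcls (Suc k) (f i) = bcls (Suc k) (h j)"
              using big_par[OF oki D(2) i(2) nb p1 p2 p3] .
            then have "bR c k (f i) (h j)" using okf[of i] D(2) i(1) by (simp add: bR_def)
            then show ?thesis using i(1) by blast
          qed
        qed
      qed
      have "bR c k (f m) (h l)" using hl okf[of m] bR_refl by simp
      then show ?thesis using tph inter by blast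
    qed
  qed
qed


lemma bR_sym: "flipR (bR c) = bR c"
  by (auto simp: fun_eq_iff flipR_def bR_def)

lemma bglab: "glab (blb p) (bR c)"
  unfolding glab_def bR_def blb_def
proof (intro allI impI)
  fix k s t assume "bok c s \<and> bok c t \<and> bcls (Suc k) s = bcls (Suc k) t"
  then have "bl s = bl t" by (cases s; cases t) (auto split: if_splits)
  then show "(if bl s then {p} else {}) = (if bl t then {p} else {})" by simp
qed

lemma bEG: "gEG bch (bR c)"
  unfolding gEG_def
proof (intro allI impI)
  fix k \<sigma> \<tau> f
  assume R: "bR c (Suc k) \<sigma> \<tau>" and P: "itp bch \<sigma> f"
  have ok\<sigma>: "bok c \<sigma>" and ok\<tau>: "bok c \<tau>" and cl: "bcls (Suc (Suc k)) \<sigma> = bcls (Suc (Suc k)) \<tau>"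
    using R by (auto simp: bR_def)
  have f0: "f 0 = \<sigma>" using P by (simp add: itp_def)
  show "\<exists>g. itp bch \<tau> g \<and> (\<forall>j. \<exists>i. bR c k (f i) (g j))"
  proof (cases "bbig (Suc (Suc k)) \<sigma>")
    case False
    then have "\<sigma> = \<tau>" using cls_exact[OF ok\<sigma> ok\<tau> cl] by blast
    moreover have "\<forall>j. bR c k (f j) (f j)" using itp_ok[OF ok\<sigma> P] bR_refl by blast
    ultimately show ?thesis using P by blast
  next
    case big\<sigma>: True
    have big\<tau>: "bbig (Suc (Suc k)) \<tau>" and lab: "bl \<sigma> = bl \<tau>" using cls_big[OF cl big\<sigma>] by auto
    define lp where "lp = (case \<tau> of BS l i \<Rightarrow> BN l i | _ \<Rightarrow> \<tau>)"
    have L: "lp \<in> set (bch \<tau>) \<and> lp \<in> set (bch lp) \<and> bok c lp \<and> bbig (Suc k) lp \<and> bl lp = bl \<tau>"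
      using big\<tau> ok\<tau> by (cases \<tau>) (auto simp: lp_def)
    define g where "g j = (if j = 0 then \<tau> else lp)" for j :: nat
    have "itp bch \<tau> g" using L by (auto simp: itp_def g_def)
    moreover have "\<forall>j. bR c k (f 0) (g j)"
    proof
      fix j
      have c\<sigma>: "bcls (Suc k) \<sigma> = (0, Suc k, bl \<sigma>)" using big_cls big_mono big\<sigma> by blast
      have c\<tau>: "bcls (Suc k) \<tau> = (0, Suc k, bl \<tau>)" using big_cls big_mono big\<tau> by blast
      have cl': "bcls (Suc k) lp = (0, Suc k, bl lp)" using big_cls L by blast
      show "bR c k (f 0) (g j)" using f0 ok\<sigma> ok\<tau> L c\<sigma> c\<tau> cl' lab by (auto simp: bR_def g_def)
    qed
    ultimately show ?thesis by blast
  qed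
qed

lemma all2: "(\<forall>i<(2::nat). P i) = (P 0 \<and> P 1)"
  by (auto simp: numeral_2_eq_2 less_Suc_eq)

lemma bX: "gX bch (bR c)"
  unfolding gX_def
proof (intro allI impI)
  fix k \<sigma> \<tau>
  assume R: "bR c (Suc k) \<sigma> \<tau>"
  have ok\<sigma>: "bok c \<sigma>" and ok\<tau>: "bok c \<tau>" and cl: "bcls (Suc (Suc k)) \<sigma> = bcls (Suc (Suc k)) \<tau>"
    using R by (auto simp: bR_def)
  show "\<exists>h. bij_betw h {..<length (bch \<sigma>)} {..<length (bch \<tau>)} \<and> (\<forall>i<length (bch \<sigma>). bR c k (bch \<sigma> ! i) (bch \<tau> ! h i))"
  proof (cases "bbig (Suc (Suc k)) \<sigma>")
    case False
    then have "\<sigma> = \<tau>" using cls_exact[OF ok\<sigma> ok\<tau> cl] by blast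
    moreover have "\<forall>i<length (bch \<sigma>). bR c k (bch \<sigma> ! i) (bch \<sigma> ! i)"
      using bok_child[OF ok\<sigma>] bR_refl nth_mem by blast
    ultimately show ?thesis by (intro exI[of _ id]) (auto simp: bij_betw_def)
  next
    case big\<sigma>: True
    have big\<tau>: "bbig (Suc (Suc k)) \<tau>" and lab: "bl \<sigma> = bl \<tau>" using cls_big[OF cl big\<sigma>] by auto
    have two: "{..<2::nat} = {0,1}" by auto
    have sw: "bij_betw (\<lambda>i::nat. 1 - i) {..<2} {..<2}"
      unfolding two by (auto simp: bij_betw_def inj_on_def)
    have idb: "bij_betw (\<lambda>i::nat. i) {..<2} {..<2}" by (simp add: bij_betw_def)
    show ?thesis
    proof (cases \<sigma>)
      case (BN l a)
      show ?thesis
      proof (cases \<tau>)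
        case (BN l' b)
        have "\<forall>i<2. bR c k (bch \<sigma> ! i) (bch \<tau> ! i)"
          using BN \<open>\<sigma> = BN l a\<close> big\<sigma> big\<tau> ok\<sigma> ok\<tau> lab unfolding all2 by (auto simp: bR_def min_def)
        moreover have L: "length (bch \<sigma>) = 2" "length (bch \<tau>) = 2" using BN \<open>\<sigma> = BN l a\<close> by auto
        ultimately show ?thesis unfolding L by (intro exI[of _ "\<lambda>i. i"]) (use idb in simp)
      next
        case (BS l' i)
        have "\<forall>j<2. bR c k (bch \<sigma> ! j) (bch \<tau> ! (1 - j))"
          using BS \<open>\<sigma> = BN l a\<close> big\<sigma> big\<tau> ok\<sigma> ok\<tau> lab unfolding all2 by (auto simp: bR_def min_def)
        moreover have L: "length (bch \<sigma>) = 2" "length (bch \<tau>) = 2" using BS \<open>\<sigma> = BN l a\<close> by auto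
        ultimately show ?thesis unfolding L by (intro exI[of _ "\<lambda>i. 1 - i"]) (use sw in simp)
      qed (use big\<tau> in auto)
    next
      case (BS l a)
      show ?thesis
      proof (cases \<tau>)
        case (BN l' b)
        have "\<forall>j<2. bR c k (bch \<sigma> ! j) (bch \<tau> ! (1 - j))"
          using BN \<open>\<sigma> = BS l a\<close> big\<sigma> big\<tau> ok\<sigma> ok\<tau> lab unfolding all2 by (auto simp: bR_def min_def)
        moreover have L: "length (bch \<sigma>) = 2" "length (bch \<tau>) = 2" using BN \<open>\<sigma> = BS l a\<close> by auto
        ultimately show ?thesis unfolding L by (intro exI[of _ "\<lambda>i. 1 - i"]) (use sw in simp)
      next
        case (BS l' i)
        have "\<forall>i<2. bR c k (bch \<sigma> ! i) (bch \<tau> ! i)"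
          using BS \<open>\<sigma> = BS l a\<close> big\<sigma> big\<tau> ok\<sigma> ok\<tau> lab unfolding all2 by (auto simp: bR_def min_def)
        moreover have L: "length (bch \<sigma>) = 2" "length (bch \<tau>) = 2" using BS \<open>\<sigma> = BS l a\<close> by auto
        ultimately show ?thesis unfolding L by (intro exI[of _ "\<lambda>i. i"]) (use idb in simp)
      qed (use big\<tau> in auto)
    qed (use big\<sigma> in auto)
  qed
qed


definition SAnd :: "'ap sform \<Rightarrow> 'ap sform \<Rightarrow> 'ap sform" where
  "SAnd a b = SNeg (SOr (SNeg a) (SNeg b))"
definition TT :: "'ap \<Rightarrow> 'ap sform" where "TT p = SOr (Ap p) (SNeg (Ap p))"
definition EYp :: "'ap \<Rightarrow> 'ap sform" where "EYp p = Ex (Yx (PSt (Ap p)))"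
definition chi :: "'ap \<Rightarrow> 'ap sform" where
  "chi p = SOr (SAnd (Ap p) (SNeg (EYp p))) (SAnd (SNeg (Ap p)) (EYp p))"
definition qf :: "'ap \<Rightarrow> 'ap sform" where "qf p = Dn 3 (TT p)"
definition Phi :: "'ap \<Rightarrow> 'ap sform" where "Phi p = Ex (Until (PSt (chi p)) (PSt (qf p)))"

lemma Phi_pm: "pastctlpm (Phi p)"
  by (simp add: Phi_def chi_def qf_def TT_def SAnd_def EYp_def)

lemma sem_SAnd[simp]: "sem_s t w (SAnd a b) = (sem_s t w a \<and> sem_s t w b)"
  by (simp add: SAnd_def)

lemma blb_mem[simp]: "(p \<in> blb p \<sigma>) = bl \<sigma>" by (simp add: blb_def)

lemma bT: "is_tree (mk bch (blb p) r)" by (rule is_tree_mk[OF bch_ne])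

lemma sem_p_b: "sem_s (mk bch (blb p) r) w (Ap p) = bl (tyof bch r w)"
  by (simp add: blb_def)

lemma card_ch: "w \<in> tnodes ch r \<Longrightarrow> card (children (tnodes ch r) w) = length (ch (tyof ch r w))"
  using card_children_mk[of w ch r "\<lambda>_. True"] by simp

lemma sem_q_b: "w \<in> tnodes bch r \<Longrightarrow> sem_s (mk bch (blb p) r) w (qf p) = (3 \<le> length (bch (tyof bch r w)))"
  by (simp add: qf_def TT_def card_ch)

lemma sem_EYp_b: "w \<in> tnodes bch r \<Longrightarrow> sem_s (mk bch (blb p) r) w (EYp p) = (w \<noteq> [] \<and> bl (tyof bch r (butlast w)))"
proof -
  assume w: "w \<in> tnodes bch r"
  have "sem_s (mk bch (blb p) r) w (Ex (Yx (PSt (Ap p)))) = (w \<noteq> [] \<and> sem_s (mk bch (blb p) r) (butlast w) (Ap p))"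
    by (rule sem_EY[OF bT]) (simp add: w)
  then show ?thesis unfolding EYp_def by (simp add: sem_p_b)
qed

lemma sem_chi_b: "w \<in> tnodes bch r \<Longrightarrow> sem_s (mk bch (blb p) r) w (chi p) = (bl (tyof bch r w) \<noteq> (w \<noteq> [] \<and> bl (tyof bch r (butlast w))))"
  unfolding chi_def using sem_EYp_b[of w r p] by (auto simp: sem_p_b)

lemma rep_good:
  assumes "1 \<le> A" "j \<le> A"
  shows "replicate j 1 \<in> tnodes bch (BN True A) \<and>
    tyof bch (BN True A) (replicate j 1) = (if j < A then BN (even j) (A - j) else BQ (even A))"
  using assms(2)
proof (induction j)
  case 0 then show ?case using assms by simp
next
  case (Suc j)
  then have IH: "replicate j 1 \<in> tnodes bch (BN True A)" "tyof bch (BN True A) (replicate j 1) = BN (even j) (A - j)"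
    by auto
  have rs: "replicate (Suc j) (1::nat) = replicate j 1 @ [1]" by (simp add: replicate_append_same)
  have "1 < length (bch (tyof bch (BN True A) (replicate j 1)))" using IH by simp
  then show ?case using IH Suc.prems unfolding rs by (auto simp: snoc_tnodes tyof_snoc)
qed

lemma good_Phi:
  assumes "1 \<le> A"
  shows "sem_s (mk bch (blb p) (BN True A)) [] (Phi p)"
proof -
  let ?t = "mk bch (blb p) (BN True A)"
  define f where "f j = replicate j (1::nat)" for j
  have R: "\<And>j. j \<le> A \<Longrightarrow> f j \<in> tnodes bch (BN True A) \<and>
    tyof bch (BN True A) (f j) = (if j < A then BN (even j) (A - j) else BQ (even A))"
    using rep_good[OF assms] by (simp add: f_def)
  have "npath ?t [] A f"
    unfolding npath_def
  proof (intro conjI allI impI)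
    show "f 0 = []" by (simp add: f_def)
    fix j assume "j < A"
    then have "f (Suc j) \<in> tnodes bch (BN True A)" using R by simp
    moreover have "f (Suc j) = f j @ [1]" by (simp add: f_def replicate_append_same)
    ultimately show "f (Suc j) \<in> children (fst ?t) (f j)" by (auto simp: children_def)
  qed
  moreover have "sem_s ?t (f A) (qf p)" using R[of A] sem_q_b[of "f A" "BN True A" p] by simp
  moreover have "\<forall>j<A. sem_s ?t (f j) (chi p)"
  proof (intro allI impI)
    fix j assume j: "j < A"
    show "sem_s ?t (f j) (chi p)"
    proof (cases j)
      case 0 then show ?thesis using sem_chi_b[of "f j" "BN True A" p] R[of j] j by (simp add: f_def)
    next
      case (Suc i)
      have "f j = f i @ [1]" using Suc by (simp add: f_def replicate_append_same)
      then have b: "butlast (f j) = f i" by simp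
      show ?thesis using sem_chi_b[of "f j" "BN True A" p] R[of j] R[of i] j Suc b by (auto simp: f_def)
    qed
  qed
  ultimately have "\<exists>m f. npath ?t [] m f \<and> sem_s ?t (f m) (qf p) \<and> (\<forall>j<m. sem_s ?t (f j) (chi p))" by blast
  moreover have "sem_s ?t [] (Ex (Until (PSt (chi p)) (PSt (qf p)))) =
     (\<exists>m f. npath ?t [] m f \<and> lsem ?t (f m) (PSt (qf p)) \<and> (\<forall>j<m. lsem ?t (f j) (PSt (chi p))))"
    by (rule sem_EU[OF bT]) simp_all
  ultimately show ?thesis unfolding Phi_def by simp
qed

lemma bad_Phi:
  shows "\<not> sem_s (mk bch (blb p) (BS True I)) [] (Phi p)"
proof
  let ?r = "BS True I"
  let ?t = "mk bch (blb p) ?r"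
  assume "sem_s ?t [] (Phi p)"
  moreover have "sem_s ?t [] (Ex (Until (PSt (chi p)) (PSt (qf p)))) =
     (\<exists>m f. npath ?t [] m f \<and> lsem ?t (f m) (PSt (qf p)) \<and> (\<forall>j<m. lsem ?t (f j) (PSt (chi p))))"
    by (rule sem_EU[OF bT]) simp_all
  ultimately obtain m f where f: "npath ?t [] m f" "sem_s ?t (f m) (qf p)" "\<forall>j<m. sem_s ?t (f j) (chi p)"
    unfolding Phi_def by auto
  have T: "tp bch ?r m (\<lambda>j. tyof bch ?r (f j))" "\<forall>j\<le>m. f j \<in> tnodes bch ?r"
    using npath_tp[of "[]" bch ?r "blb p" m f] f(1) by auto
  have bl: "\<And>j. j < m \<Longrightarrow> butlast (f (Suc j)) = f j"
  proof -
    fix j assume "j < m"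
    then have "f (Suc j) \<in> children (tnodes bch ?r) (f j)" using f(1) by (simp add: npath_def)
    then show "butlast (f (Suc j)) = f j" by (auto simp: children_def)
  qed
  have S: "j < m \<Longrightarrow> isBS (tyof bch ?r (f j))" for j
  proof (induction j)
    case 0 then show ?case using f(1) by (simp add: npath_def)
  next
    case (Suc j)
    then obtain l i where ty: "tyof bch ?r (f j) = BS l i" by (cases "tyof bch ?r (f j)") auto
    have "tyof bch ?r (f (Suc j)) \<in> set (bch (tyof bch ?r (f j)))" using T(1) Suc.prems unfolding tp_def by auto
    then have ch: "tyof bch ?r (f (Suc j)) \<in> set (bch (BS l i))" using ty by simp
    have c: "sem_s ?t (f (Suc j)) (chi p)" using f(3) Suc.prems by blast
    have "f (Suc j) \<in> children (tnodes bch ?r) (f j)" using f(1) Suc.prems by (simp add: npath_def)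
    then have ne: "f (Suc j) \<noteq> []" by (auto simp: children_def)
    have "bl (tyof bch ?r (f (Suc j))) \<noteq> l"
      using sem_chi_b[of "f (Suc j)" ?r p] c T(2) Suc.prems bl[of j] ty ne by auto
    then show ?case using ch by auto
  qed
  have "\<not> 3 \<le> length (bch (tyof bch ?r (f m)))"
  proof (cases m)
    case 0 then show ?thesis using f(1) by (simp add: npath_def)
  next
    case (Suc j)
    then obtain l i where ty: "tyof bch ?r (f j) = BS l i" using S[of j] by (cases "tyof bch ?r (f j)") auto
    have "tyof bch ?r (f (Suc j)) \<in> set (bch (tyof bch ?r (f j)))" using T(1) Suc unfolding tp_def by auto
    then have "tyof bch ?r (f m) \<in> set (bch (BS l i))" using ty Suc by simp
    then show ?thesis by auto
  qed
  then show False using f(2) sem_q_b[of "f m" ?r p] T(2) by simp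
qed

theorem not_ctl:
  fixes p :: 'ap
  shows "\<not> (\<exists>\<psi>\<in>CTL. init_equiv (Phi p) \<psi>)"
proof
  assume "\<exists>\<psi>\<in>CTL. init_equiv (Phi p) \<psi>"
  then obtain \<psi> where \<psi>: "pc_s \<psi>" "past_free_s \<psi>" "models (Phi p) = models \<psi>"
    by (auto simp: CTL_def init_equiv_def)
  define k where "k = sz \<psi>"
  define A where "A = 2 * k + 2"
  let ?r1 = "BN True A" and ?r2 = "BS True A"
  let ?t1 = "mk bch (blb p) ?r1" and ?t2 = "mk bch (blb p) ?r2"
  have R: "bR A k ?r1 ?r2" by (simp add: bR_def A_def min_def)
  have G: "EqS bch (blb p) ?r1 ?r2 (bR A) \<psi>"
    by (rule ctl_game[OF bch_ne bglab bX bEU _ bEG]) (simp_all add: bR_sym bEU bEG)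
  have E: "sem_s ?t1 [] \<psi> = sem_s ?t2 [] \<psi>"
    using G R \<psi>(1,2) by (simp add: EqS_def k_def)
  have "?t1 \<in> models (Phi p)" using good_Phi[of A p] bT by (simp add: models_def A_def)
  then have "?t1 \<in> models \<psi>" using \<psi>(3) by simp
  then have "sem_s ?t1 [] \<psi>" by (simp add: models_def)
  then have "?t2 \<in> models \<psi>" using E bT by (simp add: models_def)
  then have "?t2 \<in> models (Phi p)" using \<psi>(3) by simp
  then have "sem_s ?t2 [] (Phi p)" by (simp add: models_def)
  then show False using bad_Phi[of p A] by simp
qed


datatype ct = U nat nat | F int nat nat

fun cch :: "ct \<Rightarrow> ct list" where
  "cch (U i d) = [U (Suc i) (Suc d), F (int i) (Suc d) i]"
| "cch (F j d i) = (if 1 \<le> j then [F (j - 1) (Suc d) i, F (j - 1) (Suc d) i] else [F (j - 1) (Suc d) i])"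

fun cpar :: "ct \<Rightarrow> ct" where
  "cpar (U i d) = U (i - 1) (d - 1)"
| "cpar (F j d i) = (if j < int i then F (j + 1) (d - 1) i else U i (d - 1))"

fun cdep :: "ct \<Rightarrow> nat" where
  "cdep (U i d) = d" | "cdep (F j d i) = d"

fun pval :: "ct \<Rightarrow> int" where
  "pval (U i d) = int i" | "pval (F j d i) = j"

fun isU :: "ct \<Rightarrow> bool" where
  "isU (U _ _) = True" | "isU _ = False"

fun cok :: "nat \<Rightarrow> ct \<Rightarrow> bool" where
  "cok G (U i d) = (2 * G + d \<le> i)"
| "cok G (F j d i) = (j \<le> int i \<and> 2 * G \<le> i \<and> 2 * int G \<le> j + int d \<and> int i \<le> j + int d \<and>
      (int i < j + int d \<longrightarrow> int (2 * G) + (j + int d - int i) - 1 \<le> int i))"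

definition clb :: "'ap \<Rightarrow> ct \<Rightarrow> 'ap set" where
  "clb p \<sigma> = (if 1 \<le> pval \<sigma> then {p} else {})"

definition clamp :: "nat \<Rightarrow> int \<Rightarrow> int" where
  "clamp g x = max (- int g) (min (int g) x)"

definition C :: "nat \<Rightarrow> int \<Rightarrow> nat \<Rightarrow> int \<times> int" where
  "C g x d = (if d < g then (0, int d) else (1, clamp g x))"

definition ccls :: "nat \<Rightarrow> ct \<Rightarrow> int \<times> int" where
  "ccls g \<sigma> = C g (pval \<sigma>) (cdep \<sigma>)"

definition cR :: "nat \<Rightarrow> nat \<Rightarrow> ct \<Rightarrow> ct \<Rightarrow> bool" where
  "cR G k \<sigma> \<tau> \<longleftrightarrow> Suc (Suc k) \<le> G \<and> cok G \<sigma> \<and> cok G \<tau> \<and> ccls (Suc k) \<sigma> = ccls (Suc k) \<tau>"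

lemma cch_ne: "\<forall>s. cch s \<noteq> []"
  by (intro allI, case_tac s) auto

lemma cok_child: "cok G \<sigma> \<Longrightarrow> \<tau> \<in> set (cch \<sigma>) \<Longrightarrow> cok G \<tau> \<and> cpar \<tau> = \<sigma> \<and> cdep \<tau> = Suc (cdep \<sigma>)"
  by (cases \<sigma>) (auto split: if_splits)

lemma cok_par: "cok G \<sigma> \<Longrightarrow> cdep \<sigma> \<noteq> 0 \<Longrightarrow> cok G (cpar \<sigma>) \<and> cdep (cpar \<sigma>) = cdep \<sigma> - 1"
  by (cases \<sigma>) auto

lemma cok_inv: "cok G \<sigma> \<Longrightarrow> 2 * int G \<le> pval \<sigma> + int (cdep \<sigma>)"
  by (cases \<sigma>) auto

lemma cok_U: "cok G \<sigma> \<Longrightarrow> isU \<sigma> \<Longrightarrow> 2 * int G + int (cdep \<sigma>) \<le> pval \<sigma>"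
  by (cases \<sigma>) auto

lemma cok_top: "cok G (F j d i) \<Longrightarrow> 2 * G \<le> i"
  by auto

lemma cons_c: "cok G r \<Longrightarrow> cdep r = 0 \<Longrightarrow> cons cch cpar cdep (cok G) r"
  unfolding cons_def using cok_child by blast

lemma clamp_simps: "int g \<le> x \<Longrightarrow> clamp g x = int g" "x \<le> - int g \<Longrightarrow> clamp g x = - int g"
  "- int g \<le> x \<Longrightarrow> x \<le> int g \<Longrightarrow> clamp g x = x"
  by (auto simp: clamp_def)

lemma clamp_step:
  assumes "clamp (Suc g) x = clamp (Suc g) y"
  shows "clamp g x = clamp g y" "clamp g (x - 1) = clamp g (y - 1)" "clamp g (x + 1) = clamp g (y + 1)"
  using assms by (auto simp: clamp_def max_def min_def split: if_splits)

lemma clamp_mono: "x \<le> y \<Longrightarrow> clamp g x \<le> clamp g y"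
  by (auto simp: clamp_def)

lemma C_step:
  assumes "C (Suc g) P d = C (Suc g) Q e" "2 * int G \<le> P + int d" "2 * int G \<le> Q + int e" "Suc (Suc g) \<le> G"
  shows "C g P d = C g Q e"
    "C g (P - 1) (Suc d) = C g (Q - 1) (Suc e)"
    "d \<noteq> 0 \<Longrightarrow> C g (P + 1) (d - 1) = C g (Q + 1) (e - 1)"
    "d = 0 \<longleftrightarrow> e = 0"
proof -
  have cs: "(d < Suc g \<and> e = d) \<or> (Suc g \<le> d \<and> Suc g \<le> e \<and> clamp (Suc g) P = clamp (Suc g) Q)"
    using assms(1) by (auto simp: C_def split: if_splits)
  show "C g P d = C g Q e"
    using cs clamp_step[of g P Q] assms(2-4) by (auto simp: C_def clamp_def)
  show "C g (P - 1) (Suc d) = C g (Q - 1) (Suc e)"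
    using cs clamp_step[of g P Q] assms(2-4) by (auto simp: C_def clamp_def)
  show "d \<noteq> 0 \<Longrightarrow> C g (P + 1) (d - 1) = C g (Q + 1) (e - 1)"
    using cs clamp_step[of g P Q] assms(2-4) by (auto simp: C_def clamp_def)
  show "d = 0 \<longleftrightarrow> e = 0" using cs by auto
qed


lemma anc:
  assumes ok: "cok G \<sigma>" and j: "j \<le> cdep \<sigma>"
  shows "cok G ((cpar ^^ j) \<sigma>) \<and> cdep ((cpar ^^ j) \<sigma>) = cdep \<sigma> - j \<and>
    (pval ((cpar ^^ j) \<sigma>) = pval \<sigma> + int j \<or> (isU ((cpar ^^ j) \<sigma>) \<and> 2 * int G \<le> pval \<sigma> + int j))"
  using j
proof (induction j)
  case 0 then show ?case using ok by simp
next
  case (Suc j)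
  let ?a = "(cpar ^^ j) \<sigma>"
  have IH: "cok G ?a" "cdep ?a = cdep \<sigma> - j"
    "pval ?a = pval \<sigma> + int j \<or> (isU ?a \<and> 2 * int G \<le> pval \<sigma> + int j)" using Suc by auto
  have d: "cdep ?a \<noteq> 0" using IH(2) Suc.prems by simp
  have P: "cok G (cpar ?a) \<and> cdep (cpar ?a) = cdep ?a - 1" using cok_par[OF IH(1) d] .
  have "pval (cpar ?a) = pval \<sigma> + int (Suc j) \<or> (isU (cpar ?a) \<and> 2 * int G \<le> pval \<sigma> + int (Suc j))"
  proof (cases ?a)
    case (U i d')
    then show ?thesis using IH(1,3) by auto
  next
    case (F b d' i)
    then show ?thesis using IH(1,3) by auto
  qed
  then show ?case using P IH(2) by simp
qed

lemma anc_cls: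
  assumes "cok G \<sigma>" "j \<le> cdep \<sigma>" "g \<le> 2 * G"
  shows "ccls g ((cpar ^^ j) \<sigma>) = C g (pval \<sigma> + int j) (cdep \<sigma> - j)"
proof -
  have A: "cdep ((cpar ^^ j) \<sigma>) = cdep \<sigma> - j"
    "pval ((cpar ^^ j) \<sigma>) = pval \<sigma> + int j \<or> (isU ((cpar ^^ j) \<sigma>) \<and> 2 * int G \<le> pval \<sigma> + int j)"
    "cok G ((cpar ^^ j) \<sigma>)"
    using anc[OF assms(1,2)] by auto
  have "clamp g (pval ((cpar ^^ j) \<sigma>)) = clamp g (pval \<sigma> + int j)"
  proof (cases "pval ((cpar ^^ j) \<sigma>) = pval \<sigma> + int j")
    case False
    then have u: "isU ((cpar ^^ j) \<sigma>)" "2 * int G \<le> pval \<sigma> + int j" using A(2) by auto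
    have "2 * int G \<le> pval ((cpar ^^ j) \<sigma>)" using cok_U[OF A(3) u(1)] by simp
    then show ?thesis using u(2) assms(3) by (simp add: clamp_def)
  qed simp
  then show ?thesis using A(1) by (simp add: ccls_def C_def)
qed

lemma cglab: "glab (clb p) (cR G)"
  unfolding glab_def
proof (intro allI impI)
  fix k s t assume R: "cR G k s t"
  have ok: "cok G s" "cok G t" and G: "Suc (Suc k) \<le> G" and c: "C (Suc k) (pval s) (cdep s) = C (Suc k) (pval t) (cdep t)"
    using R by (auto simp: cR_def ccls_def)
  have iv: "2 * int G \<le> pval s + int (cdep s)" "2 * int G \<le> pval t + int (cdep t)" using cok_inv ok by auto
  have "(1 \<le> pval s) = (1 \<le> pval t)"
    using c iv G by (auto simp: C_def clamp_def split: if_splits)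
  then show "clb p s = clb p t" by (simp add: clb_def)
qed

lemma child_cls:
  assumes "cok G \<sigma>" "c \<in> set (cch \<sigma>)" "g < 2 * G"
  shows "ccls g c = C g (pval \<sigma> - 1) (Suc (cdep \<sigma>))"
  using assms by (cases \<sigma>) (auto simp: ccls_def C_def clamp_def split: if_splits)

lemma len_cch: "cok G \<sigma> \<Longrightarrow> 1 \<le> G \<Longrightarrow> length (cch \<sigma>) = (if 1 \<le> pval \<sigma> then 2 else 1)"
  by (cases \<sigma>) auto

lemma cX: "gX cch (cR G)"
  unfolding gX_def
proof (intro allI impI)
  fix k s t assume R: "cR G (Suc k) s t"
  have ok: "cok G s" "cok G t" and G: "Suc (Suc (Suc k)) \<le> G"
    and c: "C (Suc (Suc k)) (pval s) (cdep s) = C (Suc (Suc k)) (pval t) (cdep t)"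
    using R by (auto simp: cR_def ccls_def)
  have iv: "2 * int G \<le> pval s + int (cdep s)" "2 * int G \<le> pval t + int (cdep t)" using cok_inv ok by auto
  have lab: "(1 \<le> pval s) = (1 \<le> pval t)"
    using c iv G by (auto simp: C_def clamp_def split: if_splits)
  have L: "length (cch s) = length (cch t)" using len_cch[OF ok(1)] len_cch[OF ok(2)] G lab by simp
  have cc: "C (Suc k) (pval s - 1) (Suc (cdep s)) = C (Suc k) (pval t - 1) (Suc (cdep t))"
    using C_step(2)[OF c iv] G by simp
  have "\<forall>i<length (cch s). cR G k (cch s ! i) (cch t ! i)"
  proof (intro allI impI)
    fix i assume i: "i < length (cch s)"
    then have m: "cch s ! i \<in> set (cch s)" "cch t ! i \<in> set (cch t)" using L by auto
    have "ccls (Suc k) (cch s ! i) = ccls (Suc k) (cch t ! i)"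
      using child_cls[OF ok(1) m(1)] child_cls[OF ok(2) m(2)] cc G by simp
    then show "cR G k (cch s ! i) (cch t ! i)"
      using cok_child[OF ok(1) m(1)] cok_child[OF ok(2) m(2)] G by (simp add: cR_def)
  qed
  then show "\<exists>h. bij_betw h {..<length (cch s)} {..<length (cch t)} \<and> (\<forall>i<length (cch s). cR G k (cch s ! i) (cch t ! h i))"
    using L by (intro exI[of _ "\<lambda>i. i"]) (simp add: bij_betw_def)
qed

lemma cY: "gY cpar cdep (cR G)"
  unfolding gY_def
proof (intro allI impI)
  fix k s t assume R: "cR G (Suc k) s t"
  have ok: "cok G s" "cok G t" and G: "Suc (Suc (Suc k)) \<le> G"
    and c: "C (Suc (Suc k)) (pval s) (cdep s) = C (Suc (Suc k)) (pval t) (cdep t)"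
    using R by (auto simp: cR_def ccls_def)
  have iv: "2 * int G \<le> pval s + int (cdep s)" "2 * int G \<le> pval t + int (cdep t)" using cok_inv ok by auto
  have z: "cdep s = 0 \<longleftrightarrow> cdep t = 0" using C_step(4)[OF c iv] G by simp
  have "cdep s \<noteq> 0 \<longrightarrow> cR G k (cpar s) (cpar t)"
  proof
    assume d: "cdep s \<noteq> 0"
    then have d': "cdep t \<noteq> 0" using z by simp
    have a1: "ccls (Suc k) (cpar s) = C (Suc k) (pval s + 1) (cdep s - 1)"
      using anc_cls[OF ok(1), of 1 "Suc k"] d G by simp
    have a2: "ccls (Suc k) (cpar t) = C (Suc k) (pval t + 1) (cdep t - 1)"
      using anc_cls[OF ok(2), of 1 "Suc k"] d' G by simp
    have "C (Suc k) (pval s + 1) (cdep s - 1) = C (Suc k) (pval t + 1) (cdep t - 1)"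
      using C_step(3)[OF c iv] G d by simp
    then show "cR G k (cpar s) (cpar t)" using a1 a2 cok_par[OF ok(1) d] cok_par[OF ok(2) d'] G by (simp add: cR_def)
  qed
  then show "(cdep s = 0) = (cdep t = 0) \<and> (cdep s \<noteq> 0 \<longrightarrow> cR G k (cpar s) (cpar t))" using z by simp
qed


lemma clamp_range: "- int g \<le> clamp g x" "clamp g x \<le> int g"
  by (auto simp: clamp_def)

lemma clamp_id: "- int g \<le> x \<Longrightarrow> x \<le> int g \<Longrightarrow> clamp g x = x"
  by (auto simp: clamp_def)

lemma clamp_lt: "clamp g P < w \<Longrightarrow> w \<le> int g \<Longrightarrow> P < w"
  by (auto simp: clamp_def)

lemma pick:
  assumes "clamp g P \<le> w" "w \<le> int g" "- int g \<le> w"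
  shows "clamp g (P + int (if w = clamp g P then 0 else nat (w - P))) = w \<and>
         (w \<noteq> clamp g P \<longrightarrow> P + int (nat (w - P)) = w \<and> P < w)"
proof (cases "w = clamp g P")
  case True then show ?thesis by simp
next
  case False
  then have "clamp g P < w" using assms(1) by simp
  then have "P < w" using clamp_lt assms(2) by blast
  then show ?thesis using False clamp_id[OF assms(3,2)] by simp
qed

lemma ES_arith:
  fixes P Q :: int and d e n g G :: nat
  assumes c: "C (Suc g) P d = C (Suc g) Q e" and iP: "2 * int G \<le> P + int d" and iQ: "2 * int G \<le> Q + int e"
    and G: "Suc (Suc g) \<le> G" and n: "n \<le> d"
  shows "\<exists>r\<le>e. C g (P + int n) (d - n) = C g (Q + int r) (e - r) \<and>
           (\<forall>h<r. \<exists>j<n. C g (P + int j) (d - j) = C g (Q + int h) (e - h))"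
proof -
  have cs: "(d < Suc g \<and> e = d) \<or> (Suc g \<le> d \<and> Suc g \<le> e \<and> clamp (Suc g) P = clamp (Suc g) Q)"
    using c by (auto simp: C_def split: if_splits)
  show ?thesis
  proof (cases "d - n < g")
    case A: True
    define r where "r = e - (d - n)"
    have ed: "d - n \<le> e" using cs A by auto
    have t: "C g (P + int n) (d - n) = C g (Q + int r) (e - r)"
      using ed A by (simp add: r_def C_def)
    have "\<forall>h<r. \<exists>j<n. C g (P + int j) (d - j) = C g (Q + int h) (e - h)"
    proof (intro allI impI)
      fix h assume h: "h < r"
      define D where "D = e - h"
      have Dgt: "d - n < D" using h ed by (simp add: r_def D_def)
      show "\<exists>j<n. C g (P + int j) (d - j) = C g (Q + int h) (e - h)"
      proof (cases "D < g")
        case True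
        have Dd: "D \<le> d" using cs True D_def by auto
        have "d - D < n" using Dgt n Dd by simp
        moreover have "C g (P + int (d - D)) (d - (d - D)) = C g (Q + int h) (e - h)"
          using True Dd by (simp add: C_def D_def)
        ultimately show ?thesis by blast
      next
        case False
        show ?thesis
        proof (cases "d < Suc g \<and> e = d")
          case True
          then have Dg: "D = g" "h = e - g" using False D_def h r_def by auto
          have j: "h < n" using True Dg False A n D_def by arith
          have e1: "int g \<le> P + int h" using iP G True Dg False D_def by simp
          have e2: "int g \<le> Q + int h" using iQ G True Dg False D_def by simp
          have "C g (P + int h) (d - h) = C g (Q + int h) (e - h)"
            using True Dg e1 e2 by (simp add: C_def clamp_simps)
          then show ?thesis using j by blast
        next
          case deep: False
          then have dp: "Suc g \<le> d" "Suc g \<le> e" "clamp (Suc g) P = clamp (Suc g) Q" using cs by auto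
          have cg: "clamp g P = clamp g Q" using clamp_step(1)[OF dp(3)] .
          define w where "w = clamp g (Q + int h)"
          have w1: "clamp g P \<le> w" using cg clamp_mono[of Q "Q + int h" g] by (simp add: w_def)
          have w2: "w \<le> int g" "- int g \<le> w" using clamp_range by (auto simp: w_def)
          define j where "j = (if w = clamp g P then 0 else nat (w - P))"
          have pk: "clamp g (P + int j) = w" "w \<noteq> clamp g P \<longrightarrow> P + int j = w \<and> P < w"
            using pick[OF w1 w2] by (auto simp: j_def)
          have dj: "g \<le> d - j \<and> j \<le> d"
          proof (cases "w = clamp g P")
            case True then show ?thesis using dp by (simp add: j_def)
          next
            case False
            then have "P + int j = w" using pk by blast
            then show ?thesis using iP G w2 by linarith
          qed
          have jn: "j < n" using dj A by linarith
          have "C g (P + int j) (d - j) = C g (Q + int h) (e - h)"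
            using dj pk(1) False by (simp add: C_def D_def w_def)
          then show ?thesis using jn by blast
        qed
      qed
    qed
    moreover have "r \<le> e" by (simp add: r_def)
    ultimately show ?thesis using t by blast
  next
    case B: False
    show ?thesis
    proof (cases "n = 0")
      case True
      have "C g P d = C g Q e" using C_step(1)[OF c iP iQ G] .
      then show ?thesis using True by (intro exI[of _ 0]) simp
    next
      case n0: False
      have sd: "Suc g \<le> d" using B n0 n by arith
      then have dp: "Suc g \<le> d" "Suc g \<le> e" "clamp (Suc g) P = clamp (Suc g) Q" using cs by auto
      have cg: "clamp g P = clamp g Q" using clamp_step(1)[OF dp(3)] .
      define w where "w = clamp g (P + int n)"
      have w1: "clamp g Q \<le> w" using cg clamp_mono[of P "P + int n" g] by (simp add: w_def)
      have w2: "w \<le> int g" "- int g \<le> w" using clamp_range by (auto simp: w_def)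
      define r where "r = (if w = clamp g Q then 0 else nat (w - Q))"
      have pk: "clamp g (Q + int r) = w" "w \<noteq> clamp g Q \<longrightarrow> Q + int r = w \<and> Q < w"
        using pick[OF w1 w2] by (auto simp: r_def)
      have er: "g \<le> e - r \<and> r \<le> e"
      proof (cases "w = clamp g Q")
        case True then show ?thesis using dp by (simp add: r_def)
      next
        case False
        then have "Q + int r = w" using pk by blast
        then show ?thesis using iQ G w2 by linarith
      qed
      have t: "C g (P + int n) (d - n) = C g (Q + int r) (e - r)"
        using B er pk(1) by (simp add: C_def w_def)
      have "\<forall>h<r. \<exists>j<n. C g (P + int j) (d - j) = C g (Q + int h) (e - h)"
      proof (intro allI impI)
        fix h assume h: "h < r"
        then have wne: "w \<noteq> clamp g Q" by (simp add: r_def split: if_splits)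
        then have Qr: "Q + int r = w" "Q < w" using pk by auto
        define v where "v = clamp g (Q + int h)"
        have v1: "clamp g P \<le> v" using cg clamp_mono[of Q "Q + int h" g] by (simp add: v_def)
        have v2: "v \<le> int g" "- int g \<le> v" using clamp_range by (auto simp: v_def)
        have vw: "v < w"
        proof -
          have "Q + int h < w" using Qr h by simp
          moreover have "clamp g Q < w" using w1 wne by simp
          ultimately show ?thesis using w2 by (auto simp: v_def clamp_def)
        qed
        define j where "j = (if v = clamp g P then 0 else nat (v - P))"
        have pk2: "clamp g (P + int j) = v" "v \<noteq> clamp g P \<longrightarrow> P + int j = v \<and> P < v"
          using pick[OF v1 v2] by (auto simp: j_def)
        have jn: "j < n"
        proof (cases "v = clamp g P")
          case True then show ?thesis using n0 by (simp add: j_def)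
        next
          case False
          then have pj: "P + int j = v" using pk2 by blast
          have "\<not> P + int n \<le> v"
          proof
            assume "P + int n \<le> v"
            then have "w \<le> clamp g v" using clamp_mono[of "P + int n" v g] by (simp add: w_def)
            then show False using vw clamp_id[OF v2(2) v2(1)] by simp
          qed
          then show ?thesis using pj by linarith
        qed
        have gg: "g \<le> d - j" "g \<le> e - h" using jn B er h n by arith+
        have "C g (P + int j) (d - j) = C g (Q + int h) (e - h)"
          using gg pk2(1) by (simp add: C_def v_def)
        then show "\<exists>j<n. C g (P + int j) (d - j) = C g (Q + int h) (e - h)" using jn by blast
      qed
      then show ?thesis using t er by blast
    qed
  qed
qed

lemma cS: "gS cpar cdep (cR G)"
  unfolding gS_def
proof (intro allI impI)
  fix k s t n assume R: "cR G (Suc k) s t" and n: "n \<le> cdep s"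
  have ok: "cok G s" "cok G t" and G: "Suc (Suc (Suc k)) \<le> G"
    and c: "C (Suc (Suc k)) (pval s) (cdep s) = C (Suc (Suc k)) (pval t) (cdep t)"
    using R by (auto simp: cR_def ccls_def)
  have iv: "2 * int G \<le> pval s + int (cdep s)" "2 * int G \<le> pval t + int (cdep t)" using cok_inv ok by auto
  obtain r where r: "r \<le> cdep t" "C (Suc k) (pval s + int n) (cdep s - n) = C (Suc k) (pval t + int r) (cdep t - r)"
    "\<forall>h<r. \<exists>j<n. C (Suc k) (pval s + int j) (cdep s - j) = C (Suc k) (pval t + int h) (cdep t - h)"
    using ES_arith[OF c iv G n] by blast
  have As: "\<And>j. j \<le> cdep s \<Longrightarrow> cok G ((cpar ^^ j) s) \<and> ccls (Suc k) ((cpar ^^ j) s) = C (Suc k) (pval s + int j) (cdep s - j)"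
    using anc[OF ok(1)] anc_cls[OF ok(1)] G by auto
  have At: "\<And>j. j \<le> cdep t \<Longrightarrow> cok G ((cpar ^^ j) t) \<and> ccls (Suc k) ((cpar ^^ j) t) = C (Suc k) (pval t + int j) (cdep t - j)"
    using anc[OF ok(2)] anc_cls[OF ok(2)] G by auto
  have "cR G k ((cpar ^^ n) s) ((cpar ^^ r) t)" using As[OF n] At[OF r(1)] r(2) G by (simp add: cR_def)
  moreover have "\<forall>h<r. \<exists>j<n. cR G k ((cpar ^^ j) s) ((cpar ^^ h) t)"
  proof (intro allI impI)
    fix h assume h: "h < r"
    then obtain j where j: "j < n" "C (Suc k) (pval s + int j) (cdep s - j) = C (Suc k) (pval t + int h) (cdep t - h)"
      using r(3) by blast
    have "cR G k ((cpar ^^ j) s) ((cpar ^^ h) t)" using As[of j] At[of h] j n h r(1) G by (simp add: cR_def)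
    then show "\<exists>j<n. cR G k ((cpar ^^ j) s) ((cpar ^^ h) t)" using j(1) by blast
  qed
  ultimately show "\<exists>r\<le>cdep t. cR G k ((cpar ^^ n) s) ((cpar ^^ r) t) \<and> (\<forall>h<r. \<exists>j<n. cR G k ((cpar ^^ j) s) ((cpar ^^ h) t))"
    using r(1) by blast
qed


definition cdsc :: "ct \<Rightarrow> ct" where "cdsc \<sigma> = last (cch \<sigma>)"

lemma cdsc_mem: "cdsc \<sigma> \<in> set (cch \<sigma>)"
  by (cases \<sigma>) (auto simp: cdsc_def)

lemma cdsc_simps[simp]: "cdsc (U i d) = F (int i) (Suc d) i" "cdsc (F j d i) = F (j - 1) (Suc d) i"
  by (auto simp: cdsc_def)

lemma cdsc_iter:
  assumes "cok G \<tau>"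
  shows "cok G ((cdsc ^^ j) \<tau>) \<and> cdep ((cdsc ^^ j) \<tau>) = cdep \<tau> + j \<and> pval ((cdsc ^^ j) \<tau>) \<le> pval \<tau> \<and>
    ((\<not> isU \<tau> \<or> 0 < j) \<longrightarrow> \<not> isU ((cdsc ^^ j) \<tau>) \<and> pval ((cdsc ^^ j) \<tau>) = pval \<tau> + (if isU \<tau> then 1 else 0) - int j)"
proof (induction j)
  case 0 then show ?case using assms by simp
next
  case (Suc j)
  let ?a = "(cdsc ^^ j) \<tau>"
  have ok: "cok G (cdsc ?a)" "cdep (cdsc ?a) = Suc (cdep ?a)" using cok_child[OF _ cdsc_mem] Suc by auto
  show ?case
  proof (cases "\<not> isU \<tau> \<or> 0 < j")
    case True
    then have "\<not> isU ?a" "pval ?a = pval \<tau> + (if isU \<tau> then 1 else 0) - int j" using Suc by auto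
    then have "\<not> isU (cdsc ?a) \<and> pval (cdsc ?a) = pval \<tau> + (if isU \<tau> then 1 else 0) - int (Suc j)"
      by (cases ?a) auto
    moreover have "pval \<tau> + (if isU \<tau> then 1 else 0) - int (Suc j) \<le> pval \<tau>" using True by auto
    ultimately show ?thesis using ok Suc by auto
  next
    case False
    then have "j = 0" "isU \<tau>" by auto
    then show ?thesis using ok assms by (cases \<tau>) auto
  qed
qed

lemma cdsc_tp: "tp cch \<tau> l (\<lambda>j. (cdsc ^^ j) \<tau>)"
  by (simp add: tp_def cdsc_mem)

lemma ctp_facts:
  assumes "cok G \<sigma>" "tp cch \<sigma> m f" "j \<le> m"
  shows "cok G (f j) \<and> cdep (f j) = cdep \<sigma> + j"
  using assms(3)
proof (induction j)
  case 0 then show ?case using assms by (simp add: tp_def)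
next
  case (Suc j)
  then have "f (Suc j) \<in> set (cch (f j))" using assms(2) by (simp add: tp_def)
  then show ?case using cok_child Suc by auto
qed

lemma cF_child: "\<not> isU \<sigma> \<Longrightarrow> c \<in> set (cch \<sigma>) \<Longrightarrow> \<not> isU c \<and> pval c = pval \<sigma> - 1"
  by (cases \<sigma>) (auto split: if_splits)

lemma cU_child: "cok G \<sigma> \<Longrightarrow> isU \<sigma> \<Longrightarrow> c \<in> set (cch \<sigma>) \<Longrightarrow> isU c \<or> 2 * int G \<le> pval c"
  by (cases \<sigma>) auto

lemma cpersist:
  assumes "tp cch \<sigma> m f" "\<not> isU \<sigma>" "j \<le> m"
  shows "\<not> isU (f j) \<and> pval (f j) = pval \<sigma> - int j"
  using assms(3)
proof (induction j)
  case 0 then show ?case using assms by (simp add: tp_def)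
next
  case (Suc j)
  then have "f (Suc j) \<in> set (cch (f j))" using assms(1) by (simp add: tp_def)
  then show ?case using cF_child Suc by fastforce
qed

lemma IVT_c:
  assumes "tp cch \<sigma> m f" "cok G \<sigma>" "\<not> isU (f m)" "pval (f m) < v" "v \<le> pval \<sigma>" "v < 2 * int G"
  shows "\<exists>i<m. \<not> isU (f i) \<and> pval (f i) = v"
  using assms
proof (induction m)
  case 0 then show ?case by (simp add: tp_def)
next
  case (Suc m)
  have tpm: "tp cch \<sigma> m f" using Suc.prems(1) by (simp add: tp_def)
  have ch: "f (Suc m) \<in> set (cch (f m))" using Suc.prems(1) by (simp add: tp_def)
  have okm: "cok G (f m)" using ctp_facts[OF Suc.prems(2) tpm] by simp
  show ?case
  proof (cases "isU (f m)")
    case True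
    then show ?thesis using cU_child[OF okm True ch] Suc.prems by auto
  next
    case False
    have pm: "pval (f (Suc m)) = pval (f m) - 1" using cF_child[OF False ch] by simp
    show ?thesis
    proof (cases "pval (f m) = v")
      case True then show ?thesis using False by auto
    next
      case ne: False
      have "pval (f m) < v" using pm ne Suc.prems(4) by simp
      then obtain i where "i < m" "\<not> isU (f i)" "pval (f i) = v"
        using Suc.IH[OF tpm Suc.prems(2) False _ Suc.prems(5,6)] by blast
      then show ?thesis using less_SucI by blast
    qed
  qed
qed


lemma cEU: "gEU cch (cR G)"
  unfolding gEU_def
proof (intro allI impI)
  fix k \<sigma> \<tau> m f
  assume R: "cR G (Suc k) \<sigma> \<tau>" and P: "tp cch \<sigma> m f"
  define g where "g = Suc k"
  have G: "Suc (Suc g) \<le> G" and ok\<sigma>: "cok G \<sigma>" and ok\<tau>: "cok G \<tau>"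
    and c: "C (Suc g) (pval \<sigma>) (cdep \<sigma>) = C (Suc g) (pval \<tau>) (cdep \<tau>)"
    using R by (auto simp: cR_def ccls_def g_def)
  have iv\<sigma>: "2 * int G \<le> pval \<sigma> + int (cdep \<sigma>)" and iv\<tau>: "2 * int G \<le> pval \<tau> + int (cdep \<tau>)"
    using cok_inv ok\<sigma> ok\<tau> by auto
  have cs0: "(cdep \<sigma> < Suc g \<and> cdep \<tau> = cdep \<sigma>) \<or>
      (Suc g \<le> cdep \<sigma> \<and> Suc g \<le> cdep \<tau> \<and> clamp (Suc g) (pval \<sigma>) = clamp (Suc g) (pval \<tau>))"
    using c by (auto simp: C_def split: if_splits)
  have ff: "\<And>j. j \<le> m \<Longrightarrow> cok G (f j) \<and> cdep (f j) = cdep \<sigma> + j" using ctp_facts[OF ok\<sigma> P] by blast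
  have f0: "f 0 = \<sigma>" using P by (simp add: tp_def)
  have Rk: "\<And>x y. cok G x \<Longrightarrow> cok G y \<Longrightarrow> C g (pval x) (cdep x) = C g (pval y) (cdep y) \<Longrightarrow> cR G k x y"
    using G by (simp add: cR_def ccls_def g_def)
  define h where "h j = (cdsc ^^ j) \<tau>" for j
  have tph: "\<And>l. tp cch \<tau> l h" unfolding h_def by (rule cdsc_tp)
  have hf: "\<And>j. cok G (h j) \<and> cdep (h j) = cdep \<tau> + j \<and> pval (h j) \<le> pval \<tau> \<and>
    ((\<not> isU \<tau> \<or> 0 < j) \<longrightarrow> \<not> isU (h j) \<and> pval (h j) = pval \<tau> + (if isU \<tau> then 1 else 0) - int j)"
    unfolding h_def using cdsc_iter[OF ok\<tau>] by blast
  have em: "cok G (f m)" "cdep (f m) = cdep \<sigma> + m" using ff[of m] by auto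
  have ive: "2 * int G \<le> pval (f m) + int (cdep \<sigma> + m)" using cok_inv[OF em(1)] em(2) by simp
  show "\<exists>l h. tp cch \<tau> l h \<and> cR G k (f m) (h l) \<and> (\<forall>j<l. \<exists>i<m. cR G k (f i) (h j))"
  proof (cases "cdep \<sigma> + m < g")
    case True
    have d: "cdep \<tau> = cdep \<sigma>" using cs0 True by auto
    have "\<And>j. j \<le> m \<Longrightarrow> cR G k (f j) (h j)"
    proof -
      fix j assume j: "j \<le> m"
      show "cR G k (f j) (h j)"
        by (rule Rk) (use ff[OF j] hf[of j] d True j in \<open>auto simp: C_def\<close>)
    qed
    then show ?thesis using tph by (intro exI[of _ m] exI[of _ h]) auto
  next
    case deep: False
    show ?thesis
    proof (cases "int g \<le> pval (f m)")
      case big: True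
      have ce: "C g (pval (f m)) (cdep (f m)) = (1, int g)"
        using deep big em by (simp add: C_def clamp_simps)
      show ?thesis
      proof (cases "g \<le> cdep \<tau>")
        case True
        have "int g \<le> pval \<tau>"
        proof (cases "cdep \<sigma> < Suc g")
          case True
          then have "cdep \<tau> = g" using cs0 \<open>g \<le> cdep \<tau>\<close> by auto
          then show ?thesis using iv\<tau> G by simp
        next
          case False
          then have cl: "clamp (Suc g) (pval \<sigma>) = clamp (Suc g) (pval \<tau>)" using cs0 by auto
          have "int g \<le> pval \<sigma>"
          proof (cases "isU \<sigma>")
            case True then show ?thesis using cok_U[OF ok\<sigma>] G by simp
          next
            case False then show ?thesis using cpersist[OF P False, of m] big by simp
          qed
          then show ?thesis using cl by (auto simp: clamp_def)
        qed
        then have "C g (pval \<tau>) (cdep \<tau>) = (1, int g)" using True by (simp add: C_def clamp_simps)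
        then have "cR G k (f m) (h 0)" using Rk[OF em(1) ok\<tau>] ce by (simp add: h_def)
        then show ?thesis using tph by (intro exI[of _ 0] exI[of _ h]) auto
      next
        case False
        have d: "cdep \<tau> = cdep \<sigma>" using cs0 False by auto
        define l where "l = g - cdep \<tau>"
        have hl: "cok G (h l)" "cdep (h l) = g" using hf[of l] False by (auto simp: l_def)
        have "int g \<le> pval (h l)" using cok_inv[OF hl(1)] hl(2) G by simp
        then have "C g (pval (h l)) (cdep (h l)) = (1, int g)" using hl by (simp add: C_def clamp_simps)
        then have e: "cR G k (f m) (h l)" using Rk[OF em(1) hl(1)] ce by simp
        have "\<forall>j<l. \<exists>i<m. cR G k (f i) (h j)"
        proof (intro allI impI)
          fix j assume j: "j < l"
          have jm: "j < m" using j deep d by (simp add: l_def)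
          have "cR G k (f j) (h j)"
            by (rule Rk) (use ff[of j] hf[of j] d j jm in \<open>auto simp: C_def l_def\<close>)
          then show "\<exists>i<m. cR G k (f i) (h j)" using jm by blast
        qed
        then show ?thesis using tph e by blast
      qed
    next
      case small: False
      have eF: "\<not> isU (f m)" using cok_U[OF em(1)] small G by auto
      have dbig: "g < cdep \<sigma> + m" using ive small G by linarith
      have Pge: "pval (f m) \<le> pval \<sigma>"
      proof (cases "isU \<sigma>")
        case True then show ?thesis using cok_U[OF ok\<sigma>] small G by simp
      next
        case False then show ?thesis using cpersist[OF P False, of m] by simp
      qed
      have ce: "C g (pval (f m)) (cdep (f m)) = (1, clamp g (pval (f m)))"
        using deep em by (simp add: C_def)
      show ?thesis
      proof (cases "\<not> isU \<tau> \<and> pval \<tau> \<le> - int g \<and> pval (f m) \<le> - int g")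
        case True
        have "g \<le> cdep \<tau>" using iv\<tau> True by linarith
        then have "C g (pval \<tau>) (cdep \<tau>) = (1, - int g)" using True by (simp add: C_def clamp_simps)
        moreover have "clamp g (pval (f m)) = - int g" using True by (simp add: clamp_simps)
        ultimately have "cR G k (f m) (h 0)" using Rk[OF em(1) ok\<tau>] ce by (simp add: h_def)
        then show ?thesis using tph by (intro exI[of _ 0] exI[of _ h]) auto
      next
        case n3a: False
        define ps where "ps = max (- int g) (pval (f m))"
        have claim: "\<not> isU \<tau> \<Longrightarrow> ps \<le> pval \<tau>"
        proof -
          assume nU: "\<not> isU \<tau>"
          show "ps \<le> pval \<tau>"
          proof (cases "pval (f m) \<le> - int g")
            case True
            then show ?thesis using n3a nU by (auto simp: ps_def)
          next
            case False
            show ?thesis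
            proof (rule ccontr)
              assume "\<not> ps \<le> pval \<tau>"
              then have lt: "pval \<tau> < pval (f m)" using False by (simp add: ps_def)
              show False
              proof (cases "cdep \<sigma> < Suc g")
                case True
                then have "cdep \<tau> \<le> g" using cs0 by auto
                then show False using iv\<tau> lt small G by linarith
              next
                case False
                then have cl: "clamp (Suc g) (pval \<sigma>) = clamp (Suc g) (pval \<tau>)" using cs0 by auto
                show False using cl lt Pge small \<open>\<not> pval (f m) \<le> - int g\<close> by (auto simp: clamp_def)
              qed
            qed
          qed
        qed
        define P' where "P' = pval \<tau> + (if isU \<tau> then 1 else 0)"
        have psP: "ps \<le> P'"
        proof (cases "isU \<tau>")
          case True then show ?thesis using cok_U[OF ok\<tau>] small G by (simp add: ps_def P'_def)
        next
          case False then show ?thesis using claim by (simp add: P'_def)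
        qed
        define l where "l = nat (P' - ps)"
        have lint: "int l = P' - ps" using psP by (simp add: l_def)
        have lU: "isU \<tau> \<Longrightarrow> 0 < l" using cok_U[OF ok\<tau>] small G lint by (auto simp: P'_def ps_def)
        have hl: "cok G (h l)" "cdep (h l) = cdep \<tau> + l" "\<not> isU (h l)" "pval (h l) = ps"
          using hf[of l] lU lint by (auto simp: P'_def)
        have dl: "g \<le> cdep (h l)" using cok_inv[OF hl(1)] hl(4) small G by (simp add: ps_def)
        have "C g (pval (h l)) (cdep (h l)) = (1, clamp g (pval (f m)))"
          using dl hl(4) small by (simp add: C_def ps_def clamp_def)
        then have e: "cR G k (f m) (h l)" using Rk[OF em(1) hl(1)] ce by simp
        have "\<forall>j<l. \<exists>i<m. cR G k (f i) (h j)"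
        proof (intro allI impI)
          fix j assume j: "j < l"
          have hj: "cok G (h j)" "cdep (h j) = cdep \<tau> + j" "pval (h j) \<le> pval \<tau>" using hf[of j] by auto
          have Pgt: "ps < pval (h j)"
          proof (cases "\<not> isU \<tau> \<or> 0 < j")
            case True
            then have "pval (h j) = P' - int j" using hf[of j] by (simp add: P'_def)
            then show ?thesis using lint j by simp
          next
            case False
            then have "h j = \<tau>" "isU \<tau>" by (auto simp: h_def)
            then show ?thesis using cok_U[OF ok\<tau>] small G by (simp add: ps_def)
          qed
          show "\<exists>i<m. cR G k (f i) (h j)"
          proof (cases "cdep (h j) < g")
            case True
            then have d: "cdep \<tau> = cdep \<sigma>" using cs0 hj(2) by auto
            have jm: "j < m" using True hj(2) d deep by simp
            have "cR G k (f j) (h j)"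
              by (rule Rk) (use ff[of j] hj d True jm in \<open>auto simp: C_def\<close>)
            then show ?thesis using jm by blast
          next
            case dj: False
            show ?thesis
            proof (cases "int g \<le> pval (h j)")
              case True
              have ch: "C g (pval (h j)) (cdep (h j)) = (1, int g)" using dj True by (simp add: C_def clamp_simps)
              show ?thesis
              proof (cases "g \<le> cdep \<sigma>")
                case True
                have "int g \<le> pval \<sigma>"
                proof (cases "cdep \<sigma> < Suc g")
                  case True then show ?thesis using iv\<sigma> G by simp
                next
                  case False
                  then have cl: "clamp (Suc g) (pval \<sigma>) = clamp (Suc g) (pval \<tau>)" using cs0 by auto
                  have "int g \<le> pval \<tau>" using hj(3) \<open>int g \<le> pval (h j)\<close> by simp
                  then show ?thesis using cl by (auto simp: clamp_def)
                qed
                then have m0: "0 < m" using small f0 by (cases m) auto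
                have "C g (pval \<sigma>) (cdep \<sigma>) = (1, int g)" using True \<open>int g \<le> pval \<sigma>\<close> by (simp add: C_def clamp_simps)
                then have "cR G k (f 0) (h j)" using Rk[OF _ hj(1)] ok\<sigma> f0 ch by simp
                then show ?thesis using m0 by blast
              next
                case False
                define i0 where "i0 = g - cdep \<sigma>"
                have i0m: "i0 < m" using False dbig by (simp add: i0_def)
                have fi: "cok G (f i0)" "cdep (f i0) = g" using ff[of i0] i0m False by (auto simp: i0_def)
                have "int g \<le> pval (f i0)" using cok_inv[OF fi(1)] fi(2) G by simp
                then have "C g (pval (f i0)) (cdep (f i0)) = (1, int g)" using fi by (simp add: C_def clamp_simps)
                then have "cR G k (f i0) (h j)" using Rk[OF fi(1) hj(1)] ch by simp
                then show ?thesis using i0m by blast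
              qed
            next
              case False
              have Pyle: "pval (h j) \<le> pval \<sigma>"
              proof (cases "cdep \<sigma> < Suc g")
                case True then show ?thesis using iv\<sigma> False G by simp
              next
                case nd: False
                then have cl: "clamp (Suc g) (pval \<sigma>) = clamp (Suc g) (pval \<tau>)" using cs0 by auto
                have "- int g < pval (h j)" using Pgt by (simp add: ps_def)
                then show ?thesis using cl hj(3) False by (auto simp: clamp_def)
              qed
              have lt: "pval (f m) < pval (h j)" using Pgt by (simp add: ps_def)
              obtain i where i: "i < m" "\<not> isU (f i)" "pval (f i) = pval (h j)"
                using IVT_c[OF P ok\<sigma> eF lt Pyle] False G by auto
              have fi: "cok G (f i)" using ff[of i] i by simp
              have "g \<le> cdep (f i)" using cok_inv[OF fi] i(3) False G by linarith
              then have "C g (pval (f i)) (cdep (f i)) = C g (pval (h j)) (cdep (h j))"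
                using dj i(3) by (simp add: C_def)
              then have "cR G k (f i) (h j)" using Rk[OF fi hj(1)] by simp
              then show ?thesis using i(1) by blast
            qed
          qed
        qed
        then show ?thesis using tph e by blast
      qed
    qed
  qed
qed


definition EGf :: "'ap \<Rightarrow> 'ap sform" where
  "EGf p = Ex (Release (PSt (SNeg (TT p))) (PSt (Ap p)))"

lemma EGf_ctl: "pc_s (EGf p) \<and> past_free_s (EGf p)"
  by (simp add: EGf_def TT_def)

lemma cT: "is_tree (mk cch (clb p) r)" by (rule is_tree_mk[OF cch_ne])

lemma clb_mem[simp]: "(p \<in> clb p \<sigma>) = (1 \<le> pval \<sigma>)" by (simp add: clb_def)

lemma sem_EGf:
  "sem_s (mk cch (clb p) r) [] (EGf p) \<longleftrightarrow>
     (\<exists>f. inpath (mk cch (clb p) r) [] f \<and> (\<forall>j. 1 \<le> pval (tyof cch r (f j))))"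
proof -
  have "sem_s (mk cch (clb p) r) [] (EGf p) \<longleftrightarrow>
     (\<exists>f. inpath (mk cch (clb p) r) [] f \<and> (\<forall>j. lsem (mk cch (clb p) r) (f j) (PSt (Ap p)))) \<or>
     (\<exists>m f. npath (mk cch (clb p) r) [] m f \<and> lsem (mk cch (clb p) r) (f m) (PSt (SNeg (TT p))) \<and>
        lsem (mk cch (clb p) r) (f m) (PSt (Ap p)) \<and> (\<forall>j<m. lsem (mk cch (clb p) r) (f j) (PSt (Ap p))))"
    unfolding EGf_def by (rule sem_ER[OF cT]) simp_all
  then show ?thesis by (simp add: TT_def)
qed

lemma good_EG:
  assumes "1 \<le> N"
  shows "sem_s (mk cch (clb p) (U N 0)) [] (EGf p)"
proof -
  have "itp cch (U N 0) (\<lambda>j. U (N + j) j)" by (simp add: itp_def)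
  then obtain f where f: "inpath (mk cch (clb p) (U N 0)) [] f" "\<forall>j. tyof cch (U N 0) (f j) = U (N + j) j"
    using itp_inpath[of "[]" cch "U N 0"] by fastforce
  then show ?thesis using assms by (auto simp: sem_EGf)
qed

lemma itp_F: "itp cch (F q 0 i) g \<Longrightarrow> g j = F (q - int j) j i"
proof (induction j)
  case 0 then show ?case by (simp add: itp_def)
next
  case (Suc j)
  have "g (Suc j) \<in> set (cch (g j))" using Suc.prems by (simp add: itp_def)
  then have "g (Suc j) \<in> set (cch (F (q - int j) j i))" using Suc by simp
  then have "g (Suc j) = F (q - int j - 1) (Suc j) i" by (auto split: if_splits)
  then show ?case by (simp add: algebra_simps)
qed

lemma bad_EG:
  shows "\<not> sem_s (mk cch (clb p) (F (int M) 0 M)) [] (EGf p)"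
proof
  assume "sem_s (mk cch (clb p) (F (int M) 0 M)) [] (EGf p)"
  then obtain f where f: "inpath (mk cch (clb p) (F (int M) 0 M)) [] f" "\<forall>j. 1 \<le> pval (tyof cch (F (int M) 0 M) (f j))"
    by (auto simp: sem_EGf)
  have "itp cch (F (int M) 0 M) (\<lambda>j. tyof cch (F (int M) 0 M) (f j))"
    using inpath_itp[of "[]" cch "F (int M) 0 M"] f(1) by auto
  then have "tyof cch (F (int M) 0 M) (f M) = F 0 M M" using itp_F by fastforce
  then show False using f(2) by (metis pval.simps(2) not_one_le_zero)
qed

lemma cR_sym: "flipR (cR G) = cR G"
  by (auto simp: fun_eq_iff flipR_def cR_def)

theorem not_pastpm:
  fixes p :: 'ap
  shows "\<not> (\<exists>\<psi>\<in>PastCTLpm. init_equiv (EGf p) \<psi>)"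
proof
  assume "\<exists>\<psi>\<in>PastCTLpm. init_equiv (EGf p) \<psi>"
  then obtain \<psi> where \<psi>: "pastctlpm \<psi>" "models (EGf p) = models \<psi>"
    by (auto simp: PastCTLpm_def init_equiv_def)
  define k where "k = sz \<psi>"
  define G where "G = k + 2"
  define N where "N = 2 * G"
  let ?r1 = "U N 0" and ?r2 = "F (int N) 0 N"
  let ?t1 = "mk cch (clb p) ?r1" and ?t2 = "mk cch (clb p) ?r2"
  have ok1: "cok G ?r1" and ok2: "cok G ?r2" by (simp_all add: N_def)
  have R: "cR G k ?r1 ?r2" using ok1 ok2 by (simp add: cR_def ccls_def C_def G_def)
  have Gm: "EqT cch (clb p) ?r1 ?r2 (cR G) \<psi>"
    by (rule past_game[OF cch_ne cglab cX cEU _ cY cS _ cons_c[OF ok1] cons_c[OF ok2]])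
       (simp_all add: cR_sym cEU cS)
  have E: "sem_s ?t1 [] \<psi> = sem_s ?t2 [] \<psi>"
    using Gm R \<psi>(1) by (simp add: EqT_def k_def)
  have "?t1 \<in> models (EGf p)" using good_EG[of N p] cT by (simp add: models_def N_def G_def)
  then have "?t1 \<in> models \<psi>" using \<psi>(2) by simp
  then have "sem_s ?t1 [] \<psi>" by (simp add: models_def)
  then have "?t2 \<in> models \<psi>" using E cT by (simp add: models_def)
  then have "?t2 \<in> models (EGf p)" using \<psi>(2) by simp
  then have "sem_s ?t2 [] (EGf p)" by (simp add: models_def)
  then show False using bad_EG[of p N] by simp
qed


lemma ctlpm_pastctlpm: "ctlpm \<phi> \<Longrightarrow> pastctlpm \<phi>"
  by (induction \<phi> rule: pastctlpm_ctlpm.induct(2)[where P = "\<lambda>_. True"]) (auto split: pform.splits)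

lemma pastctlpm_pc: "pastctlpm \<phi> \<Longrightarrow> pc_s \<phi>"
  by (induction \<phi> rule: pastctlpm_ctlpm.induct(1)[where Q = "\<lambda>_. True"]) (auto split: pform.splits)

lemma ctlpm_ctl: "ctlpm \<phi> \<Longrightarrow> pc_s \<phi> \<and> past_free_s \<phi>"
  by (induction \<phi> rule: pastctlpm_ctlpm.induct(2)[where P = "\<lambda>_. True"]) (auto split: pform.splits)

theorem theorem3p2:
  shows "(CTLpm :: ('ap::finite) sform set) \<subseteq> PastCTLpm
    \<and> (PastCTLpm :: 'ap sform set) \<subseteq> PastCTL
    \<and> strictly_less_expressive (CTLpm :: 'ap sform set) PastCTLpm
    \<and> incomparable (PastCTLpm :: 'ap sform set) CTL
    \<and> strictly_less_expressive (PastCTLpm :: 'ap sform set) PastCTL"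
proof -
  define p :: 'ap where "p = undefined"
  have S1: "(CTLpm :: 'ap sform set) \<subseteq> PastCTLpm"
    using ctlpm_pastctlpm by (auto simp: CTLpm_def PastCTLpm_def)
  have S2: "(PastCTLpm :: 'ap sform set) \<subseteq> PastCTL"
    using pastctlpm_pc by (auto simp: PastCTL_def PastCTLpm_def)
  have S3: "(CTLpm :: 'ap sform set) \<subseteq> CTL"
    using ctlpm_ctl by (auto simp: CTL_def CTLpm_def)
  have T: "\<And>L1 L2 :: 'ap sform set. L1 \<subseteq> L2 \<Longrightarrow> translatable L1 L2"
    by (auto simp: translatable_def init_equiv_def)
  have Phi_in: "Phi p \<in> PastCTLpm" using Phi_pm by (simp add: PastCTLpm_def)
  have EG_in: "EGf p \<in> CTL" using EGf_ctl by (simp add: CTL_def)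
  have EG_in2: "EGf p \<in> PastCTL" using EGf_ctl[of p] by (simp add: PastCTL_def)
  have A: "\<not> (\<exists>\<psi>\<in>CTL. init_equiv (Phi p) \<psi>)" by (rule not_ctl)
  have B: "\<not> (\<exists>\<psi>\<in>PastCTLpm. init_equiv (EGf p) \<psi>)" by (rule not_pastpm)
  have "strictly_less_expressive (CTLpm :: 'ap sform set) PastCTLpm"
    unfolding strictly_less_expressive_def using T[OF S1] Phi_in A S3 by blast
  moreover have "incomparable (PastCTLpm :: 'ap sform set) CTL"
    unfolding incomparable_def using Phi_in A EG_in B by blast
  moreover have "strictly_less_expressive (PastCTLpm :: 'ap sform set) PastCTL"
    unfolding strictly_less_expressive_def using T[OF S2] EG_in2 B by blast
  ultimately show ?thesis using S1 S2 by blast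
qed


end
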